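(* Let $f:(\mathbb C^n,S)\to(\mathbb C^p,0)$ be a holomorphic map-germ with $p\le n+1$ which admits a one-parameter stable unfolding $F(x,\lambda)=(f_\lambda(x),\lambda)$. Let $\phi:(\mathbb C,0)\to(\mathbb C,0)$ be a quasihomogeneous function and let $Af(x,z)=(f_{\phi(z)}(x),z)$ be the augmentation of $f$ by $F$ and $\phi$. Then $$\pi_2(i^*(\operatorname{Lift}(Af)))=\pi_2(i^*(\operatorname{Lift}(F))),$$ i.e. the set of function germs $\{\eta_{p+1}(X,0):\eta\in\operatorname{Lift}(Af)\}\subset\mathcal O_p$ equals the set $\{\eta_{p+1}(X,0):\eta\in\operatorname{Lift}(F)\}\subset\mathcal O_p$, where $\eta_{p+1}$ denotes the last component of a vector field $\eta$ on $(\mathbb C^p\times\mathbb C,0)$.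
   Context: $S\subset\mathbb C^n$ is finite. A one-parameter unfolding of $f$ is $F(x,\lambda)=(f_\lambda(x),\lambda)$ with $f_0=f$; it is stable if $\theta(F)=tF(\theta_{n+1})+wF(\theta_{p+1})$ where $tF(\xi)=dF\circ\xi$, $wF(\eta)=\eta\circ F$. For a map-germ $g$ with target $(\mathbb C^q,0)$, $\operatorname{Lift}(g)$ is the module of vector field germs $\eta$ on $(\mathbb C^q,0)$ such that $dg\circ\xi=\eta\circ g$ for some vector field germ $\xi$ on the source. A quasihomogeneous one-variable germ is of the form $\phi(z)=cz^k$. $i(X)=(X,0)$, $i^*$ is restriction of vector fields along $i$, and $\pi_2$ is projection onto the last component. *)

theory Defs
  imports "HOL-Analysis.Analysis"
begin

text \<open>Complex scalar multiplication on the (real normed) spaces C, C^n and products,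
  used to express complex-linearity of (real) Frechet derivatives.\<close>

class complex_scaled = real_normed_vector +
  fixes cscale :: "complex \<Rightarrow> 'a \<Rightarrow> 'a"

instantiation complex :: complex_scaled
begin
definition cscale_complex_def: "cscale c (z::complex) = c * z"
instance ..
end

instantiation vec :: (complex_scaled, finite) complex_scaled
begin
definition cscale_vec_def: "cscale c (x::'a^'b) = (\<chi> i. cscale c (x $ i))"
instance ..
end

instantiation prod :: (complex_scaled, complex_scaled) complex_scaled
begin
definition cscale_prod_def: "cscale c (x::'a \<times> 'b) = (cscale c (fst x), cscale c (snd x))"
instance ..
end

definition cholo_on :: "'a::complex_scaled set \<Rightarrow> ('a \<Rightarrow> 'b::complex_scaled) \<Rightarrow> bool" where
  "cholo_on U f \<longleftrightarrow> open U \<and> (\<forall>x\<in>U. \<exists>L. (f has_derivative L) (at x) \<and>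
      (\<forall>c v. L (cscale c v) = cscale c (L v)))"

definition hgerm_at :: "'a::complex_scaled set \<Rightarrow> ('a \<Rightarrow> 'b::complex_scaled) \<Rightarrow> bool" where
  "hgerm_at A f \<longleftrightarrow> (\<exists>U. open U \<and> A \<subseteq> U \<and> cholo_on U f)"

definition geq :: "'a::topological_space set \<Rightarrow> ('a \<Rightarrow> 'b) \<Rightarrow> ('a \<Rightarrow> 'b) \<Rightarrow> bool" where
  "geq A f g \<longleftrightarrow> (\<exists>U. open U \<and> A \<subseteq> U \<and> (\<forall>x\<in>U. f x = g x))"

definition germ_set_eq :: "'a::topological_space set \<Rightarrow> ('a \<Rightarrow> 'b) set \<Rightarrow> ('a \<Rightarrow> 'b) set \<Rightarrow> bool" where
  "germ_set_eq A X Y \<longleftrightarrow> (\<forall>g\<in>X. \<exists>h\<in>Y. geq A g h) \<and> (\<forall>h\<in>Y. \<exists>g\<in>X. geq A h g)"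

definition tmap :: "('a::real_normed_vector \<Rightarrow> 'b::real_normed_vector) \<Rightarrow> ('a \<Rightarrow> 'a) \<Rightarrow> 'a \<Rightarrow> 'b" where
  "tmap F \<xi> = (\<lambda>y. frechet_derivative F (at y) (\<xi> y))"

definition wmap :: "('a \<Rightarrow> 'b) \<Rightarrow> ('b \<Rightarrow> 'b) \<Rightarrow> 'a \<Rightarrow> 'b" where
  "wmap F \<eta> = \<eta> \<circ> F"

text \<open>Stability of a map-germ g:(X,A) -> (Y,0) (Mather's infinitesimal criterion, as defined
  in the paper): theta(g) = tg(theta_source) + wg(theta_target).\<close>
definition stable_germ :: "'a::complex_scaled set \<Rightarrow> ('a \<Rightarrow> 'b::complex_scaled) \<Rightarrow> bool" where
  "stable_germ A g \<longleftrightarrow> (\<forall>h. hgerm_at A h \<longrightarrow>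
     (\<exists>\<xi> \<eta>. hgerm_at A \<xi> \<and> hgerm_at {0} \<eta> \<and>
        geq A h (\<lambda>y. tmap g \<xi> y + wmap g \<eta> y)))"

definition Lift :: "'a::complex_scaled set \<Rightarrow> ('a \<Rightarrow> 'b::complex_scaled) \<Rightarrow> ('b \<Rightarrow> 'b) set" where
  "Lift A g = {\<eta>. hgerm_at {0} \<eta> \<and> (\<exists>\<xi>. hgerm_at A \<xi> \<and> geq A (tmap g \<xi>) (wmap g \<eta>))}"

definition map_germ :: "'a::complex_scaled set \<Rightarrow> ('a \<Rightarrow> 'b::complex_scaled) \<Rightarrow> bool" where
  "map_germ S f \<longleftrightarrow> hgerm_at S f \<and> (\<forall>s\<in>S. f s = 0)"

definition unf_map :: "('a \<Rightarrow> complex \<Rightarrow> 'b) \<Rightarrow> 'a \<times> complex \<Rightarrow> 'b \<times> complex" where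
  "unf_map fl = (\<lambda>(x,l). (fl x l, l))"

definition is_unfolding :: "'a::complex_scaled set \<Rightarrow> ('a \<Rightarrow> 'b::complex_scaled) \<Rightarrow> ('a \<Rightarrow> complex \<Rightarrow> 'b) \<Rightarrow> bool" where
  "is_unfolding S f fl \<longleftrightarrow> hgerm_at (S \<times> {0}) (unf_map fl) \<and> geq S (\<lambda>x. fl x 0) f"

definition aug_map :: "('a \<Rightarrow> complex \<Rightarrow> 'b) \<Rightarrow> (complex \<Rightarrow> complex) \<Rightarrow> 'a \<times> complex \<Rightarrow> 'b \<times> complex" where
  "aug_map fl \<phi> = (\<lambda>(x,z). (fl x (\<phi> z), z))"

definition pi2_istar :: "('b \<times> complex \<Rightarrow> 'b \<times> complex) \<Rightarrow> 'b \<Rightarrow> complex" where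
  "pi2_istar \<eta> = (\<lambda>X. snd (\<eta> (X, 0)))"

definition quasihom1 :: "(complex \<Rightarrow> complex) \<Rightarrow> bool" where
  "quasihom1 \<phi> \<longleftrightarrow> (\<exists>c k. c \<noteq> 0 \<and> k \<ge> 1 \<and> \<phi> = (\<lambda>z. c * z ^ k))"

end

theory Submission
  imports Defs "HOL-Complex_Analysis.Complex_Analysis"
begin

class csc = complex_scaled + euclidean_space +
  assumes cscale_add_left: "cscale (a + b) x = cscale a x + cscale b x"
  and cscale_add_right: "cscale a (x + y) = cscale a x + cscale a y"
  and cscale_of_real: "cscale (of_real r) x = r *\<^sub>R x"
  and cscale_mult: "cscale a (cscale b x) = cscale (a * b) x"
  and cscale_norm: "norm (cscale a x) = norm a * norm x"

instance complex :: csc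
  by standard (auto simp: cscale_complex_def algebra_simps norm_mult scaleR_conv_of_real)

instance vec :: (csc, finite) csc
proof
  fix a b :: complex and x y :: "'a^'b" and r :: real
  show "cscale (a + b) x = cscale a x + cscale b x"
    by (simp add: cscale_vec_def vec_eq_iff cscale_add_left)
  show "cscale a (x + y) = cscale a x + cscale a y"
    by (simp add: cscale_vec_def vec_eq_iff cscale_add_right)
  show "cscale (of_real r) x = r *\<^sub>R x"
    by (simp add: cscale_vec_def vec_eq_iff cscale_of_real)
  show "cscale a (cscale b x) = cscale (a * b) x"
    by (simp add: cscale_vec_def vec_eq_iff cscale_mult)
  show "norm (cscale a x) = norm a * norm x"
    by (simp add: cscale_vec_def norm_vec_def L2_set_def cscale_norm power_mult_distrib
        sum_distrib_left[symmetric] real_sqrt_mult)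
qed

instance prod :: (csc, csc) csc
proof
  fix a b :: complex and x y :: "'a \<times> 'b" and r :: real
  show "cscale (a + b) x = cscale a x + cscale b x"
    by (simp add: cscale_prod_def cscale_add_left)
  show "cscale a (x + y) = cscale a x + cscale a y"
    by (simp add: cscale_prod_def cscale_add_right)
  show "cscale (of_real r) x = r *\<^sub>R x"
    by (simp add: cscale_prod_def cscale_of_real prod_eq_iff)
  show "cscale a (cscale b x) = cscale (a * b) x"
    by (simp add: cscale_prod_def cscale_mult)
  show "norm (cscale a x) = norm a * norm x"
    by (simp add: cscale_prod_def norm_prod_def cscale_norm power_mult_distrib
        distrib_left[symmetric] real_sqrt_mult)
qed

lemma cholo_deriv:
  assumes "cholo_on U f" "x \<in> U"
  shows "(f has_derivative frechet_derivative f (at x)) (at x)"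
    "\<And>c v. frechet_derivative f (at x) (cscale c v) = cscale c (frechet_derivative f (at x) v)"
proof -
  obtain L where L: "(f has_derivative L) (at x)" "\<forall>c v. L (cscale c v) = cscale c (L v)"
    using assms unfolding cholo_on_def by blast
  have "L = frechet_derivative f (at x)" using L(1) by (rule frechet_derivative_at)
  then show "(f has_derivative frechet_derivative f (at x)) (at x)"
    "\<And>c v. frechet_derivative f (at x) (cscale c v) = cscale c (frechet_derivative f (at x) v)"
    using L by auto
qed

lemma cholo_open: "cholo_on U f \<Longrightarrow> open U" by (simp add: cholo_on_def)

lemma cholo_continuous_on: "cholo_on U f \<Longrightarrow> continuous_on U f"
  by (rule continuous_at_imp_continuous_on)
     (auto intro: has_derivative_continuous cholo_deriv(1))

lemma bounded_linear_cscale_left: "bounded_linear (\<lambda>h::complex. cscale h (v::'a::csc))"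
proof (rule bounded_linear_intro[where K="norm v"])
  fix x y :: complex and r :: real
  show "cscale (x + y) v = cscale x v + cscale y v" by (rule cscale_add_left)
  have "cscale (r *\<^sub>R x) v = cscale (of_real r) (cscale x v)"
    by (simp add: cscale_mult scaleR_conv_of_real)
  then show "cscale (r *\<^sub>R x) v = r *\<^sub>R cscale x v" by (simp add: cscale_of_real)
  show "norm (cscale x v) \<le> norm x * norm v" by (simp add: cscale_norm)
qed

lemma line_has_derivative:
  "((\<lambda>t::complex. p + cscale t (v::'a::csc)) has_derivative (\<lambda>h. cscale h v)) (at t)"
  by (auto intro!: derivative_eq_intros bounded_linear.has_derivative[OF bounded_linear_cscale_left])

lemma cholo_line_deriv:
  fixes f :: "'a::csc \<Rightarrow> complex"
  assumes "cholo_on U f" "p + cscale t v \<in> U"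
  shows "((\<lambda>t. f (p + cscale t v)) has_field_derivative
           frechet_derivative f (at (p + cscale t v)) v) (at t)"
proof -
  note D = cholo_deriv[OF assms]
  have "((\<lambda>t. f (p + cscale t v)) has_derivative
      (\<lambda>h. frechet_derivative f (at (p + cscale t v)) (cscale h v))) (at t)"
    using has_derivative_compose[OF line_has_derivative D(1)] by (simp add: o_def)
  moreover have "(\<lambda>h. frechet_derivative f (at (p + cscale t v)) (cscale h v)) =
      (*) (frechet_derivative f (at (p + cscale t v)) v)"
    by (auto simp: D(2) cscale_complex_def)
  ultimately show ?thesis by (simp add: has_field_derivative_def)
qed

lemma cscale_zero_left [simp]: "cscale 0 (v::'a::csc) = 0"
  using cscale_of_real[of 0 v] by simp

lemma cholo_circle_integral:
  fixes f :: "'a::csc \<Rightarrow> complex"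
  assumes "cholo_on U f" "r > 0" "\<And>t. norm t \<le> r \<Longrightarrow> p + cscale t v \<in> U"
  shows "((\<lambda>u. f (p + cscale u v) / u^2) has_contour_integral
           (2 * pi * \<i> * frechet_derivative f (at p) v)) (circlepath 0 r)"
proof -
  define h where "h = (\<lambda>t. f (p + cscale t v))"
  have hd: "\<And>t. norm t \<le> r \<Longrightarrow> (h has_field_derivative frechet_derivative f (at (p + cscale t v)) v) (at t)"
    unfolding h_def using assms by (intro cholo_line_deriv) auto
  have hol: "h holomorphic_on cball 0 r"
    unfolding holomorphic_on_def field_differentiable_def
    using hd has_field_derivative_at_within by (metis mem_cball_0)
  have "((\<lambda>u. h u / (u-0) ^ (Suc 1)) has_contour_integral
      ((2 * pi * \<i>) / (fact 1) * (deriv ^^ 1) h 0)) (circlepath 0 r)"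
    by (rule Cauchy_has_contour_integral_higher_derivative_circlepath)
      (use hol assms in \<open>auto intro: holomorphic_on_imp_continuous_on holomorphic_on_subset\<close>)
  moreover have "deriv h 0 = frechet_derivative f (at p) v"
    using hd[of 0] assms(2) by (auto intro!: DERIV_imp_deriv)
  ultimately show ?thesis by (simp add: h_def power2_eq_square)
qed

lemma linear_frechet_cholo:
  assumes "cholo_on U f" "x \<in> U"
  shows "linear (frechet_derivative f (at x))"
  using cholo_deriv(1)[OF assms] has_derivative_linear by blast

lemma cholo_deriv_cont:
  fixes f :: "'a::csc \<Rightarrow> complex"
  assumes "cholo_on U f"
  shows "continuous_on U (\<lambda>p. frechet_derivative f (at p) v)"
proof (cases "v = 0")
  case True
  have "continuous_on U (\<lambda>p. 0::complex)" by simp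
  then show ?thesis
    by (rule continuous_on_cong[THEN iffD1, rotated 2])
       (use True linear_frechet_cholo[OF assms] in \<open>auto simp: linear_0\<close>)
next
  case False
  have opU: "open U" using assms by (rule cholo_open)
  show ?thesis
  proof (rule continuous_at_imp_continuous_on, rule ballI)
    fix p0 assume p0: "p0 \<in> U"
    obtain \<epsilon> where \<epsilon>: "\<epsilon> > 0" "cball p0 \<epsilon> \<subseteq> U"
      using open_contains_cball opU p0 by blast
    define r where "r = \<epsilon> / (2 * norm v)"
    have r: "r > 0" using \<epsilon> False by (simp add: r_def)
    have inU: "p + cscale t v \<in> cball p0 \<epsilon>" if "dist p p0 \<le> \<epsilon>/2" "norm t \<le> r" for p t
    proof -
      have "norm (cscale t v) \<le> \<epsilon>/2"
        using that False by (simp add: cscale_norm r_def field_simps mult_right_mono)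
      then have "dist (p + cscale t v) p0 \<le> \<epsilon>"
        using that(1) norm_triangle_ineq[of "p - p0" "cscale t v"]
        by (simp add: dist_norm algebra_simps)
      then show ?thesis by (simp add: dist_commute)
    qed
    define I where "I p = 2 * pi * \<i> * frechet_derivative f (at p) v" for p
    have HI: "((\<lambda>u. f (p + cscale u v) / u^2) has_contour_integral I p) (circlepath 0 r)"
      if "dist p p0 \<le> \<epsilon>/2" for p
      unfolding I_def using that \<epsilon> inU r
      by (intro cholo_circle_integral[OF assms]) auto
    have uc: "uniformly_continuous_on (cball p0 \<epsilon>) f"
      using \<epsilon> assms
      by (intro compact_uniformly_continuous continuous_on_subset[OF cholo_continuous_on]) auto
    show "continuous (at p0) (\<lambda>p. frechet_derivative f (at p) v)"
      unfolding continuous_at_eps_delta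
    proof (intro allI impI)
      fix e :: real assume e: "e > 0"
      obtain d where d: "d > 0" "\<forall>x\<in>cball p0 \<epsilon>. \<forall>x'\<in>cball p0 \<epsilon>. dist x' x < d \<longrightarrow> dist (f x') (f x) < e * r / 2"
        using uc e r unfolding uniformly_continuous_on_def
        by (metis divide_pos_pos half_gt_zero_iff mult_pos_pos zero_less_numeral)
      show "\<exists>d>0. \<forall>p. dist p p0 < d \<longrightarrow> dist (frechet_derivative f (at p) v) (frechet_derivative f (at p0) v) < e"
      proof (intro exI[of _ "min d (\<epsilon>/2)"] conjI allI impI)
        show "min d (\<epsilon>/2) > 0" using d \<epsilon> by simp
        fix p assume p: "dist p p0 < min d (\<epsilon>/2)"
        have "((\<lambda>u. f (p + cscale u v) / u^2 - f (p0 + cscale u v) / u^2) has_contour_integral (I p - I p0)) (circlepath 0 r)"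
          using p \<epsilon> by (intro has_contour_integral_diff HI) auto
        moreover have "norm (f (p + cscale u v) / u^2 - f (p0 + cscale u v) / u^2) \<le> (e * r / 2) / r^2"
          if "norm (u - 0) = r" for u
        proof -
          have a: "p + cscale u v \<in> cball p0 \<epsilon>" "p0 + cscale u v \<in> cball p0 \<epsilon>"
            using inU that p \<epsilon> by auto
          have "dist (p + cscale u v) (p0 + cscale u v) < d" using p by (simp add: dist_norm)
          then have "norm (f (p + cscale u v) - f (p0 + cscale u v)) < e * r / 2"
            using d(2) a by (auto simp: dist_norm)
          moreover have "f (p + cscale u v) / u^2 - f (p0 + cscale u v) / u^2 = (f (p + cscale u v) - f (p0 + cscale u v)) / u^2"
            by (simp add: diff_divide_distrib)
          ultimately show ?thesis using that r
            by (simp add: norm_divide norm_power field_simps)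
        qed
        ultimately have "norm (I p - I p0) \<le> (e * r / 2) / r^2 * (2 * pi * r)"
          using e r by (intro has_contour_integral_bound_circlepath) auto
        also have "\<dots> = pi * e" using r by (simp add: power2_eq_square field_simps)
        finally have "norm (I p - I p0) \<le> pi * e" .
        moreover have "I p - I p0 = (2 * pi * \<i>) * (frechet_derivative f (at p) v - frechet_derivative f (at p0) v)"
          by (simp add: I_def algebra_simps)
        ultimately have "2 * pi * norm (frechet_derivative f (at p) v - frechet_derivative f (at p0) v) \<le> pi * e"
          by (simp add: norm_mult)
        then have "norm (frechet_derivative f (at p) v - frechet_derivative f (at p0) v) \<le> e / 2"
          using pi_gt_zero by (simp add: field_simps)
        then show "dist (frechet_derivative f (at p) v) (frechet_derivative f (at p0) v) < e"
          using e by (simp add: dist_norm)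
      qed
    qed
  qed
qed



definition cyc :: "real \<Rightarrow> real \<Rightarrow> complex" where
  "cyc r t = of_real r * exp (2 * of_real pi * \<i> * of_real t)"
definition dcyc :: "real \<Rightarrow> real \<Rightarrow> complex" where
  "dcyc r t = 2 * pi * \<i> * r * exp (2 * of_real pi * \<i> * t)"

lemma norm_cyc [simp]: "r \<ge> 0 \<Longrightarrow> norm (cyc r t) = r"
  by (simp add: cyc_def norm_mult)

lemma continuous_on_cyc [continuous_intros]: "continuous_on S f \<Longrightarrow> continuous_on S (\<lambda>x. cyc r (f x))"
  unfolding cyc_def by (intro continuous_intros)
lemma continuous_on_dcyc [continuous_intros]: "continuous_on S f \<Longrightarrow> continuous_on S (\<lambda>x. dcyc r (f x))"
  unfolding dcyc_def by (intro continuous_intros)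

definition Rop :: "('a \<times> complex \<Rightarrow> complex) \<Rightarrow> real \<Rightarrow> nat \<Rightarrow> nat \<Rightarrow> 'a \<times> complex \<Rightarrow> complex" where
  "Rop g r k q = (\<lambda>(y,w). contour_integral (circlepath 0 r) (\<lambda>\<zeta>. g (y,\<zeta>) * \<zeta>^q / (\<zeta>^k - w)))"

lemma Rop_integral:
  "Rop g r k q p = integral (cbox 0 1)
     (\<lambda>t. g (fst p, cyc r t) * (cyc r t ^ q / (cyc r t ^ k - snd p) * dcyc r t))"
  unfolding Rop_def split_beta contour_integral_integral vector_derivative_circlepath
  by (simp add: circlepath cyc_def dcyc_def mult.assoc)

lemma cscale_zero_right [simp]: "cscale a (0::'a::csc) = 0"
  using cscale_add_right[of a "0::'a" 0] by simp

lemma cscale_complex [simp]: "cscale c (z::complex) = c * z"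
  by (simp add: cscale_complex_def)

lemma Rop_cholo:
  fixes g :: "'a::csc \<times> complex \<Rightarrow> complex"
  assumes g: "cholo_on V g" and Y: "open Y" and r: "r > 0"
    and YV: "\<And>y \<zeta>. y \<in> Y \<Longrightarrow> norm \<zeta> \<le> r \<Longrightarrow> (y,\<zeta>) \<in> V"
  shows "cholo_on (Y \<times> ball 0 (r^k)) (Rop g r k q)"
  unfolding cholo_on_def
proof (intro conjI ballI)
  show opW: "open (Y \<times> ball (0::complex) (r^k))" using Y by (simp add: open_Times)
  define W where "W = Y \<times> ball (0::complex) (r^k)"
  fix p0 assume p0: "p0 \<in> Y \<times> ball (0::complex) (r^k)"
  obtain e where e: "e > 0" "ball p0 e \<subseteq> W"
    using opW p0 unfolding W_def open_contains_ball by blast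
  define U where "U = ball p0 e"
  define K1 where "K1 p t = cyc r t ^ q / (cyc r t ^ k - snd p) * dcyc r t" for p :: "'a \<times> complex" and t
  define K2 where "K2 p t = cyc r t ^ q * dcyc r t / (cyc r t ^ k - snd p)^2" for p :: "'a \<times> complex" and t
  define D where "D p t = (\<lambda>v. frechet_derivative g (at (fst p, cyc r t)) (fst v, 0) * K1 p t
       + g (fst p, cyc r t) * K2 p t * snd v)" for p :: "'a \<times> complex" and t
  define Fi where "Fi p t = g (fst p, cyc r t) * K1 p t" for p :: "'a \<times> complex" and t
  have den: "cyc r t ^ k - snd p \<noteq> 0" if "p \<in> W" for p t
  proof
    assume "cyc r t ^ k - snd p = 0"
    then have "norm (cyc r t ^ k) = norm (snd p)" by simp
    then show False using that r by (auto simp: W_def norm_power)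
  qed
  have inV: "(fst p, cyc r t) \<in> V" if "p \<in> W" for p t
    using that r by (auto simp: W_def intro!: YV)
  have blD: "bounded_linear (D p t)" if "p \<in> W" for p t
  proof -
    have "bounded_linear (frechet_derivative g (at (fst p, cyc r t)))"
      using cholo_deriv(1)[OF g inV[OF that]] by (rule has_derivative_bounded_linear)
    then have "bounded_linear (\<lambda>v::'a\<times>complex. frechet_derivative g (at (fst p, cyc r t)) (fst v, 0))"
      by (rule bounded_linear_compose) (auto intro!: bounded_linear_intros)
    then have b1: "bounded_linear (\<lambda>v::'a\<times>complex. frechet_derivative g (at (fst p, cyc r t)) (fst v, 0) * K1 p t)"
      by (rule bounded_linear_compose[OF bounded_linear_mult_left])
    have b2: "bounded_linear (\<lambda>v::'a\<times>complex. g (fst p, cyc r t) * K2 p t * snd v)"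
      by (rule bounded_linear_compose[OF bounded_linear_mult_right bounded_linear_snd])
    show ?thesis unfolding D_def using b1 b2 by (rule bounded_linear_add)
  qed
  have deriv: "((\<lambda>p. Fi p t) has_derivative D p t) (at p within U)" if "p \<in> U" for p t
  proof -
    have pW: "p \<in> W" using that e by (auto simp: U_def)
    have d1: "((\<lambda>p. g (fst p, cyc r t)) has_derivative
        (\<lambda>v. frechet_derivative g (at (fst p, cyc r t)) (fst v, 0))) (at p within U)"
    proof -
      have "((\<lambda>p::'a\<times>complex. (fst p, cyc r t)) has_derivative (\<lambda>v. (fst v, 0))) (at p within U)"
        by (auto intro!: derivative_eq_intros)
      from has_derivative_compose[OF this cholo_deriv(1)[OF g inV[OF pW]]]
      show ?thesis by (simp add: o_def)
    qed
    have d2: "((\<lambda>p. K1 p t) has_derivative (\<lambda>v. K2 p t * snd v)) (at p within U)"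
    proof -
      have "((\<lambda>p. cyc r t ^ q / (cyc r t ^ k - snd p) * dcyc r t) has_derivative
         (\<lambda>h. ((0 * (cyc r t ^ k - snd p) - cyc r t ^ q * (0 - snd h)) /
                ((cyc r t ^ k - snd p) * (cyc r t ^ k - snd p))) * dcyc r t)) (at p within U)"
        by (intro has_derivative_mult_left has_derivative_divide' has_derivative_const
            has_derivative_diff has_derivative_snd has_derivative_ident den pW)
      then show ?thesis unfolding K1_def K2_def
        by (rule has_derivative_eq_rhs) (auto simp: power2_eq_square)
    qed
    show ?thesis unfolding Fi_def D_def
      by (rule has_derivative_eq_rhs, rule has_derivative_mult[OF d1 d2])
         (auto simp: algebra_simps)
  qed
  have UW: "U \<subseteq> W" using e by (simp add: U_def)
  have cont_gc: "continuous_on S (\<lambda>x. g (fst (a x), cyc r (b x)))"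
    if "continuous_on S a" "continuous_on S b" "a ` S \<subseteq> W" for S and a :: "'c::topological_space \<Rightarrow> 'a \<times> complex" and b
    by (rule continuous_on_compose2[OF cholo_continuous_on[OF g]])
       (use that in \<open>auto intro!: continuous_intros inV\<close>)
  have cont_dg: "continuous_on S (\<lambda>x. frechet_derivative g (at (fst (a x), cyc r (b x))) v)"
    if "continuous_on S a" "continuous_on S b" "a ` S \<subseteq> W" for S v and a :: "'c::topological_space \<Rightarrow> 'a \<times> complex" and b
    by (rule continuous_on_compose2[OF cholo_deriv_cont[OF g], where f="\<lambda>x. (fst (a x), cyc r (b x))"])
       (use that in \<open>auto intro!: continuous_intros inV\<close>)
  have cont_K1: "continuous_on S (\<lambda>x. K1 (a x) (b x))"
    if "continuous_on S a" "continuous_on S b" "a ` S \<subseteq> W" for S and a :: "'c::topological_space \<Rightarrow> 'a \<times> complex" and b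
    unfolding K1_def using that
    by (intro continuous_intros) (auto, metis den image_subset_iff right_minus_eq)
  have cont_K2: "continuous_on S (\<lambda>x. K2 (a x) (b x))"
    if "continuous_on S a" "continuous_on S b" "a ` S \<subseteq> W" for S and a :: "'c::topological_space \<Rightarrow> 'a \<times> complex" and b
    unfolding K2_def using that
    by (intro continuous_intros) (auto, metis den image_subset_iff right_minus_eq)
  have intF: "(Fi p) integrable_on cbox 0 1" if "p \<in> U" for p
    unfolding Fi_def using that UW
    by (intro integrable_continuous continuous_intros cont_gc cont_K1) auto
  have cont_fx: "continuous_on (U \<times> cbox 0 1) (\<lambda>(p, t). Blinfun (D p t))"
  proof (rule continuous_on_blinfun_componentwise)
    fix i :: "'a \<times> complex" assume "i \<in> Basis"
    have "continuous_on (U \<times> cbox 0 1) (\<lambda>x. D (fst x) (snd x) i)"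
      unfolding D_def using UW
      by (intro continuous_intros cont_gc cont_dg cont_K1 cont_K2) auto
    moreover have "D (fst x) (snd x) i = blinfun_apply (case x of (p, t) \<Rightarrow> Blinfun (D p t)) i"
      if "x \<in> U \<times> cbox 0 1" for x
      using that UW blD by (auto simp: bounded_linear_Blinfun_apply split: prod.splits)
    ultimately show "continuous_on (U \<times> cbox 0 1) (\<lambda>x. blinfun_apply (case x of (p, t) \<Rightarrow> Blinfun (D p t)) i)"
      by (rule continuous_on_eq) auto
  qed
  have p0U: "p0 \<in> U" using e by (simp add: U_def)
  have lr: "((\<lambda>p. integral (cbox 0 1) (Fi p)) has_derivative integral (cbox 0 1) (\<lambda>t. Blinfun (D p0 t))) (at p0 within U)"
  proof (rule leibniz_rule[where fx="\<lambda>p t. Blinfun (D p t)"])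
    show "\<And>x t. x \<in> U \<Longrightarrow> t \<in> cbox 0 1 \<Longrightarrow>
      ((\<lambda>x. Fi x t) has_derivative blinfun_apply (Blinfun (D x t))) (at x within U)"
      using deriv blD UW by (auto simp: bounded_linear_Blinfun_apply)
  qed (use intF cont_fx p0U in \<open>auto simp: U_def\<close>)
  have p0W: "p0 \<in> W" using p0U UW by auto
  have eqR: "Rop g r k q = (\<lambda>p. integral (cbox 0 1) (Fi p))"
    by (rule ext) (simp only: Rop_integral Fi_def[abs_def] K1_def[abs_def])
  have intD: "(\<lambda>t. Blinfun (D p0 t)) integrable_on cbox 0 1"
  proof (rule integrable_continuous)
    show "continuous_on (cbox 0 1) (\<lambda>t. Blinfun (D p0 t))"
      using continuous_on_compose2[OF cont_fx, of "cbox 0 1" "\<lambda>t. (p0, t)"] p0U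
      by (auto simp: image_subset_iff continuous_on_Pair continuous_on_const continuous_on_id)
  qed
  define L where "L = blinfun_apply (integral (cbox 0 1) (\<lambda>t. Blinfun (D p0 t)))"
  have "(Rop g r k q has_derivative L) (at p0)"
    using lr at_within_open[OF p0U] unfolding eqR L_def U_def by simp
  moreover have "L (cscale c v) = cscale c (L v)" for c v
  proof -
    have Dl: "D p0 t (cscale c v) = c * D p0 t v" for t
    proof -
      have "(fst (cscale c v), 0::complex) = cscale c (fst v, 0)"
        by (simp add: cscale_prod_def)
      then show ?thesis unfolding D_def
        using cholo_deriv(2)[OF g inV[OF p0W], where c=c and v="(fst v, 0)"]
        by (simp add: cscale_prod_def algebra_simps)
    qed
    have "L w = integral (cbox 0 1) (\<lambda>t. D p0 t w)" for w
      unfolding L_def using blinfun_apply_integral[OF intD] blD[OF p0W]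
      by (simp add: bounded_linear_Blinfun_apply)
    then show ?thesis using Dl by simp
  qed
  ultimately show "\<exists>L. (Rop g r k q has_derivative L) (at p0) \<and> (\<forall>c v. L (cscale c v) = cscale c (L v))"
    by blast
qed



definition rou :: "nat \<Rightarrow> complex" where
  "rou k = exp (2 * of_real pi * \<i> / of_nat k)"

lemma rou_pow: "rou k ^ j = exp (2 * of_real pi * \<i> * of_nat j / of_nat k)"
  unfolding rou_def by (simp add: exp_of_nat_mult[symmetric] algebra_simps)

lemma rou_pow_eq_1: "k \<ge> 1 \<Longrightarrow> rou k ^ s = 1 \<longleftrightarrow> k dvd s"
  unfolding rou_pow by (rule complex_root_unity_eq_1)

lemma rou_pow_k [simp]: "k \<ge> 1 \<Longrightarrow> rou k ^ k = 1"
  using rou_pow_eq_1 by auto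

lemma rou_pow_pow_k [simp]: "k \<ge> 1 \<Longrightarrow> (rou k ^ j) ^ k = 1"
  by (metis power_mult mult.commute rou_pow_k power_one)

lemma norm_rou [simp]: "norm (rou k) = 1"
  by (simp add: rou_def norm_exp_eq_Re)

lemma norm_rou_pow [simp]: "norm (rou k ^ j) = 1"
  by (simp add: norm_power)

lemma rou_char_sum:
  assumes "k \<ge> 1"
  shows "(\<Sum>j<k. (rou k ^ s) ^ j) = (if k dvd s then of_nat k else 0)"
proof (cases "k dvd s")
  case True
  then have "rou k ^ s = 1" using rou_pow_eq_1 assms by auto
  then show ?thesis using True by simp
next
  case False
  then have ne: "rou k ^ s \<noteq> 1" using rou_pow_eq_1 assms by auto
  have "(rou k ^ s) ^ k = 1"
    using assms by simp
  then show ?thesis using False ne by (simp add: geometric_sum)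
qed

lemma dvd_range_nat: "k dvd s \<Longrightarrow> 0 < s \<Longrightarrow> s < 2 * k \<Longrightarrow> s = (k::nat)"
  by (auto simp: dvd_def)

lemma kernel_identity:
  fixes \<zeta> z :: complex
  assumes k: "k \<ge> 1" and m: "m < k" and ne: "\<zeta>^k \<noteq> z^k"
  shows "(\<Sum>j<k. (rou k ^ j)^(k-m) / (\<zeta> - rou k ^ j * z)) = of_nat k * \<zeta>^(k-1-m) * z^m / (\<zeta>^k - z^k)"
proof -
  define S where "S u = (\<Sum>i<k. u^(k - Suc i) * \<zeta>^i)" for u
  have fac: "\<zeta>^k - z^k = (\<zeta> - rou k ^ j * z) * S (rou k ^ j * z)" for j
  proof -
    have "(rou k ^ j * z)^k = z^k" using k by (simp add: power_mult_distrib)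
    then show ?thesis unfolding S_def using power_diff_sumr2[of \<zeta> k "rou k ^ j * z"] by simp
  qed
  have inv: "1 / (\<zeta> - rou k ^ j * z) = S (rou k ^ j * z) / (\<zeta>^k - z^k)" for j
  proof -
    have nz: "\<zeta> - rou k ^ j * z \<noteq> 0" using fac[of j] ne by auto
    show ?thesis using fac[of j] ne nz by (simp add: field_simps)
  qed
  have "(\<Sum>j<k. (rou k ^ j)^(k-m) / (\<zeta> - rou k ^ j * z)) =
        (\<Sum>j<k. (rou k ^ j)^(k-m) * S (rou k ^ j * z)) / (\<zeta>^k - z^k)"
    by (simp add: sum_divide_distrib inv[unfolded divide_inverse, simplified] divide_inverse mult.assoc
        sum_distrib_right)
  also have "(\<Sum>j<k. (rou k ^ j)^(k-m) * S (rou k ^ j * z)) =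
      (\<Sum>i<k. z^(k - Suc i) * \<zeta>^i * (\<Sum>j<k. (rou k ^ (2*k - 1 - m - i)) ^ j))"
  proof -
    have "(\<Sum>j<k. (rou k ^ j)^(k-m) * S (rou k ^ j * z)) =
        (\<Sum>j<k. \<Sum>i<k. z^(k - Suc i) * \<zeta>^i * (rou k ^ (2*k - 1 - m - i)) ^ j)"
    proof (rule sum.cong[OF refl], unfold S_def sum_distrib_left, rule sum.cong[OF refl])
      fix j i assume "i \<in> {..<k}"
      then have "2*k - 1 - m - i = (k - m) + (k - Suc i)" using m by auto
      then have "(2*k - 1 - m - i) * j = j * (k - m) + j * (k - Suc i)"
        by (simp add: algebra_simps)
      then have e: "(rou k ^ (2*k - 1 - m - i)) ^ j = (rou k ^ j)^(k-m) * (rou k ^ j)^(k - Suc i)"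
        by (simp only: power_mult[symmetric] power_add[symmetric])
      show "(rou k ^ j)^(k-m) * ((rou k ^ j * z)^(k - Suc i) * \<zeta>^i) =
          z^(k - Suc i) * \<zeta>^i * (rou k ^ (2*k - 1 - m - i)) ^ j"
        unfolding e power_mult_distrib by (simp only: mult_ac)
    qed
    then show ?thesis by (simp only: sum_distrib_left) (rule sum.swap)
  qed
  also have "\<dots> = (\<Sum>i<k. if i = k - 1 - m then of_nat k * z^m * \<zeta>^(k-1-m) else 0)"
  proof (rule sum.cong[OF refl])
    fix i assume i: "i \<in> {..<k}"
    have "k dvd (2*k - 1 - m - i) \<longleftrightarrow> i = k - 1 - m"
    proof
      assume "k dvd (2*k - 1 - m - i)"
      then have "2*k - 1 - m - i = k" using i m by (intro dvd_range_nat) auto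
      then show "i = k - 1 - m" using i m by auto
    next
      assume "i = k - 1 - m" then show "k dvd (2*k - 1 - m - i)" using m by auto
    qed
    moreover have "k - Suc (k - 1 - m) = m" using m by auto
    ultimately show "z^(k - Suc i) * \<zeta>^i * (\<Sum>j<k. (rou k ^ (2*k - 1 - m - i)) ^ j) =
        (if i = k - 1 - m then of_nat k * z^m * \<zeta>^(k-1-m) else 0)"
      using rou_char_sum[OF k] by auto
  qed
  also have "\<dots> = of_nat k * z^m * \<zeta>^(k-1-m)" using m by (simp add: sum.delta)
  finally show ?thesis by (simp add: mult_ac)
qed

lemma slice_holo:
  fixes g :: "'a::csc \<times> complex \<Rightarrow> complex"
  assumes g: "cholo_on V g" and yV: "\<And>\<zeta>. norm \<zeta> \<le> r \<Longrightarrow> (y, \<zeta>) \<in> V"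
  shows "(\<lambda>\<zeta>. g (y, \<zeta>)) holomorphic_on cball 0 r"
proof -
  have eq: "(y, 0) + cscale t (0::'a, 1::complex) = (y, t)" for t
    by (simp add: cscale_prod_def)
  have "((\<lambda>t. g ((y, 0) + cscale t (0::'a, 1::complex))) has_field_derivative
           frechet_derivative g (at ((y,0) + cscale t (0, 1))) (0, 1)) (at t)" if "norm t \<le> r" for t
    by (rule cholo_line_deriv[OF g]) (use yV that eq in auto)
  then show ?thesis unfolding eq holomorphic_on_def field_differentiable_def
    by (metis has_field_derivative_at_within mem_cball_0)
qed

lemma Rop_identity:
  fixes g :: "'a::csc \<times> complex \<Rightarrow> complex"
  assumes g: "cholo_on V g" and r: "r > 0" and yV: "\<And>\<zeta>. norm \<zeta> \<le> r \<Longrightarrow> (y, \<zeta>) \<in> V"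
    and k: "k \<ge> 1" and m: "m < k" and z: "norm z < r"
  shows "z^m * Rop g r k (k-1-m) (y, z^k) =
     (2 * pi * \<i> / of_nat k) * (\<Sum>j<k. (rou k ^ j)^(k-m) * g (y, rou k ^ j * z))"
proof -
  have hol: "(\<lambda>\<zeta>. g (y, \<zeta>)) holomorphic_on cball 0 r" by (rule slice_holo[OF g yV])
  have cont: "continuous_on (cball 0 r) (\<lambda>\<zeta>. g (y, \<zeta>))"
    using hol by (rule holomorphic_on_imp_continuous_on)
  have den: "\<zeta>^k - z^k \<noteq> 0" if "\<zeta> \<in> sphere 0 r" for \<zeta>
  proof
    assume "\<zeta>^k - z^k = 0"
    then have "norm (\<zeta>^k) = norm (z^k)" by simp
    then have "norm \<zeta> ^ k = norm z ^ k" by (simp add: norm_power)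
    then have "norm \<zeta> = norm z" using k by (simp add: power_eq_iff_eq_base)
    then show False using that z by simp
  qed
  define f where "f \<zeta> = g (y, \<zeta>) * \<zeta>^(k-1-m) / (\<zeta>^k - z^k)" for \<zeta>
  have "(\<lambda>\<zeta>. g (y, \<zeta>)) ` sphere 0 r \<subseteq> UNIV" by simp
  have fint: "(f has_contour_integral Rop g r k (k-1-m) (y, z^k)) (circlepath 0 r)"
  proof -
    have "continuous_on (sphere 0 r) f"
      unfolding f_def using den
      by (intro continuous_intros continuous_on_subset[OF cont]) (auto simp: sphere_cball)
    then have "f contour_integrable_on circlepath 0 r"
      using r by (intro contour_integrable_continuous_circlepath) simp
    moreover have "f = (\<lambda>\<zeta>. g (y, \<zeta>) * \<zeta>^(k-1-m) / (\<zeta>^k - z^k))"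
      by (rule ext) (simp add: f_def)
    ultimately show ?thesis
      unfolding Rop_def using has_contour_integral_integral by (simp del: diff_Suc_1 diff_diff_left)
  qed
  have each: "((\<lambda>\<zeta>. (rou k ^ j)^(k-m) / of_nat k * (g (y, \<zeta>) / (\<zeta> - rou k ^ j * z))) has_contour_integral
       ((rou k ^ j)^(k-m) / of_nat k * (2 * of_real pi * \<i> * g (y, rou k ^ j * z)))) (circlepath 0 r)" for j
    by (intro has_contour_integral_lmul Cauchy_integral_circlepath[OF cont holomorphic_on_subset[OF hol]])
       (use z in \<open>auto simp: norm_mult\<close>)
  have sum: "((\<lambda>\<zeta>. \<Sum>j<k. (rou k ^ j)^(k-m) / of_nat k * (g (y, \<zeta>) / (\<zeta> - rou k ^ j * z))) has_contour_integral
       (\<Sum>j<k. (rou k ^ j)^(k-m) / of_nat k * (2 * of_real pi * \<i> * g (y, rou k ^ j * z)))) (circlepath 0 r)"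
    by (intro has_contour_integral_sum each) auto
  have "((\<lambda>\<zeta>. z^m * f \<zeta>) has_contour_integral
       (\<Sum>j<k. (rou k ^ j)^(k-m) / of_nat k * (2 * of_real pi * \<i> * g (y, rou k ^ j * z)))) (circlepath 0 r)"
  proof (rule has_contour_integral_eq[OF sum])
    fix \<zeta> assume "\<zeta> \<in> path_image (circlepath 0 r)"
    then have s: "\<zeta> \<in> sphere 0 r" using r by simp
    have "(\<Sum>j<k. (rou k ^ j)^(k-m) / of_nat k * (g (y, \<zeta>) / (\<zeta> - rou k ^ j * z))) =
        g (y, \<zeta>) / of_nat k * (\<Sum>j<k. (rou k ^ j)^(k-m) / (\<zeta> - rou k ^ j * z))"
      by (simp add: sum_distrib_left algebra_simps)
    also have "\<dots> = g (y, \<zeta>) / of_nat k * (of_nat k * \<zeta>^(k-1-m) * z^m / (\<zeta>^k - z^k))"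
      using den[OF s] by (subst kernel_identity[OF k m]) auto
    also have "\<dots> = z^m * f \<zeta>" using k by (simp add: f_def field_simps)
    finally show "(\<Sum>j<k. (rou k ^ j)^(k-m) / of_nat k * (g (y, \<zeta>) / (\<zeta> - rou k ^ j * z))) = z^m * f \<zeta>" .
  qed
  moreover have "((\<lambda>\<zeta>. z^m * f \<zeta>) has_contour_integral z^m * Rop g r k (k-1-m) (y, z^k)) (circlepath 0 r)"
    by (rule has_contour_integral_lmul[OF fint])
  ultimately have "z^m * Rop g r k (k-1-m) (y, z^k) =
      (\<Sum>j<k. (rou k ^ j)^(k-m) / of_nat k * (2 * of_real pi * \<i> * g (y, rou k ^ j * z)))"
    using has_contour_integral_unique by blast
  also have "\<dots> = (2 * pi * \<i> / of_nat k) * (\<Sum>j<k. (rou k ^ j)^(k-m) * g (y, rou k ^ j * z))"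
    by (simp add: sum_distrib_left algebra_simps)
  finally show ?thesis .
qed



lemma cholo_onI:
  assumes "open U" "\<And>x. x \<in> U \<Longrightarrow> \<exists>L. (f has_derivative L) (at x) \<and> (\<forall>c v. L (cscale c v) = cscale c (L v))"
  shows "cholo_on U f"
  using assms unfolding cholo_on_def by blast

lemma cscale_fst: "fst (cscale c p) = cscale c (fst p)" by (simp add: cscale_prod_def)
lemma cscale_snd: "snd (cscale c p) = cscale c (snd p)" by (simp add: cscale_prod_def)
lemma cscale_nth: "(cscale c v) $ i = cscale c (v $ i)" by (simp add: cscale_vec_def)

lemma cholo_subset: "cholo_on U f \<Longrightarrow> open V \<Longrightarrow> V \<subseteq> U \<Longrightarrow> cholo_on V f"
  unfolding cholo_on_def by blast

lemma cholo_local: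
  assumes "open U" "\<And>x. x \<in> U \<Longrightarrow> \<exists>V. open V \<and> x \<in> V \<and> cholo_on V f"
  shows "cholo_on U f"
proof (rule cholo_onI[OF assms(1)])
  fix x assume "x \<in> U"
  then obtain V where "open V" "x \<in> V" "cholo_on V f" using assms(2) by blast
  then show "\<exists>L. (f has_derivative L) (at x) \<and> (\<forall>c v. L (cscale c v) = cscale c (L v))"
    unfolding cholo_on_def by blast
qed

lemma cholo_Union:
  assumes "\<And>i. i \<in> I \<Longrightarrow> cholo_on (U i) f"
  shows "cholo_on (\<Union>i\<in>I. U i) f"
  using assms unfolding cholo_on_def by blast

lemma cholo_const: "open U \<Longrightarrow> cholo_on U (\<lambda>x. c::'b::csc)"
  by (rule cholo_onI) (auto intro!: exI[of _ "\<lambda>_. 0"])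

lemma cholo_id: "open U \<Longrightarrow> cholo_on U (\<lambda>x. x)"
  by (rule cholo_onI) (auto intro!: exI[of _ "\<lambda>h. h"])

lemma cholo_compose:
  assumes f: "cholo_on U f" and g: "cholo_on V g" and fUV: "\<And>x. x \<in> U \<Longrightarrow> f x \<in> V"
  shows "cholo_on U (\<lambda>x. g (f x))"
proof (rule cholo_onI[OF cholo_open[OF f]])
  fix x assume x: "x \<in> U"
  obtain L where L: "(f has_derivative L) (at x)" "\<forall>c v. L (cscale c v) = cscale c (L v)"
    using f x unfolding cholo_on_def by blast
  obtain M where M: "(g has_derivative M) (at (f x))" "\<forall>c v. M (cscale c v) = cscale c (M v)"
    using g fUV[OF x] unfolding cholo_on_def by blast
  show "\<exists>L. ((\<lambda>x. g (f x)) has_derivative L) (at x) \<and> (\<forall>c v. L (cscale c v) = cscale c (L v))"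
    using has_derivative_compose[OF L(1) M(1)] L(2) M(2) by (intro exI[of _ "\<lambda>h. M (L h)"]) (auto simp: o_def)
qed

lemma cholo_pair:
  assumes f: "cholo_on U f" and g: "cholo_on U g"
  shows "cholo_on U (\<lambda>x. (f x, g x))"
proof (rule cholo_onI[OF cholo_open[OF f]])
  fix x assume x: "x \<in> U"
  obtain L where L: "(f has_derivative L) (at x)" "\<forall>c v. L (cscale c v) = cscale c (L v)"
    using f x unfolding cholo_on_def by blast
  obtain M where M: "(g has_derivative M) (at x)" "\<forall>c v. M (cscale c v) = cscale c (M v)"
    using g x unfolding cholo_on_def by blast
  show "\<exists>L. ((\<lambda>x. (f x, g x)) has_derivative L) (at x) \<and> (\<forall>c v. L (cscale c v) = cscale c (L v))"
    using has_derivative_Pair[OF L(1) M(1)] L(2) M(2)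
    by (intro exI[of _ "\<lambda>h. (L h, M h)"]) (auto simp: cscale_prod_def)
qed

lemma cholo_linear_post:
  assumes f: "cholo_on U f" and P: "bounded_linear P" and Pc: "\<And>c v. P (cscale c v) = cscale c (P v)"
  shows "cholo_on U (\<lambda>x. P (f x))"
proof (rule cholo_onI[OF cholo_open[OF f]])
  fix x assume x: "x \<in> U"
  obtain L where L: "(f has_derivative L) (at x)" "\<forall>c v. L (cscale c v) = cscale c (L v)"
    using f x unfolding cholo_on_def by blast
  show "\<exists>L. ((\<lambda>x. P (f x)) has_derivative L) (at x) \<and> (\<forall>c v. L (cscale c v) = cscale c (L v))"
    using has_derivative_compose[OF L(1) bounded_linear.has_derivative[OF P has_derivative_ident]] L(2) Pc
    by (intro exI[of _ "\<lambda>h. P (L h)"]) (auto simp: o_def)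
qed

lemma cholo_fst: "cholo_on U f \<Longrightarrow> cholo_on U (\<lambda>x. fst (f x))"
  by (rule cholo_linear_post) (auto intro: bounded_linear_fst simp: cscale_fst)

lemma cholo_snd: "cholo_on U f \<Longrightarrow> cholo_on U (\<lambda>x. snd (f x))"
  by (rule cholo_linear_post) (auto intro: bounded_linear_snd simp: cscale_snd)

lemma cholo_nth: "cholo_on U f \<Longrightarrow> cholo_on U (\<lambda>x. f x $ i)"
  by (rule cholo_linear_post) (auto simp: cscale_nth)

lemma bounded_bilinear_cscale: "bounded_bilinear (\<lambda>a (v::'b::csc). cscale a v)"
proof (rule bounded_bilinear.intro)
  fix a a' :: complex and v v' :: 'b and r :: real
  show "cscale (a + a') v = cscale a v + cscale a' v" by (rule cscale_add_left)
  show "cscale a (v + v') = cscale a v + cscale a v'" by (rule cscale_add_right)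
  show "cscale (r *\<^sub>R a) v = r *\<^sub>R cscale a v"
    by (simp add: scaleR_conv_of_real cscale_of_real[symmetric] cscale_mult)
  show "cscale a (r *\<^sub>R v) = r *\<^sub>R cscale a v"
    by (simp add: cscale_of_real[symmetric] cscale_mult mult.commute)
  show "\<exists>K. \<forall>a (v::'b). norm (cscale a v) \<le> norm a * norm v * K"
    by (rule exI[of _ 1]) (simp add: cscale_norm)
qed

lemma cholo_cscale:
  fixes a :: "'a::csc \<Rightarrow> complex" and f :: "'a \<Rightarrow> 'b::csc"
  assumes a: "cholo_on U a" and f: "cholo_on U f"
  shows "cholo_on U (\<lambda>x. cscale (a x) (f x))"
proof (rule cholo_onI[OF cholo_open[OF f]])
  fix x assume x: "x \<in> U"
  obtain L where L: "(a has_derivative L) (at x)" "\<forall>c v. L (cscale c v) = cscale c (L v)"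
    using a x unfolding cholo_on_def by blast
  obtain M where M: "(f has_derivative M) (at x)" "\<forall>c v. M (cscale c v) = cscale c (M v)"
    using f x unfolding cholo_on_def by blast
  show "\<exists>L. ((\<lambda>x. cscale (a x) (f x)) has_derivative L) (at x) \<and> (\<forall>c v. L (cscale c v) = cscale c (L v))"
    using bounded_bilinear.FDERIV[OF bounded_bilinear_cscale L(1) M(1)] L(2) M(2)
    by (intro exI[of _ "\<lambda>h. cscale (a x) (M h) + cscale (L h) (f x)"])
       (auto simp: cscale_add_right cscale_mult mult.commute)
qed

lemma cholo_mult:
  fixes a b :: "'a::csc \<Rightarrow> complex"
  assumes "cholo_on U a" "cholo_on U b"
  shows "cholo_on U (\<lambda>x. a x * b x)"
  using cholo_cscale[OF assms] by simp

lemma cholo_add: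
  fixes f g :: "'a::csc \<Rightarrow> 'b::csc"
  assumes f: "cholo_on U f" and g: "cholo_on U g"
  shows "cholo_on U (\<lambda>x. f x + g x)"
proof (rule cholo_onI[OF cholo_open[OF f]])
  fix x assume x: "x \<in> U"
  obtain L where L: "(f has_derivative L) (at x)" "\<forall>c v. L (cscale c v) = cscale c (L v)"
    using f x unfolding cholo_on_def by blast
  obtain M where M: "(g has_derivative M) (at x)" "\<forall>c v. M (cscale c v) = cscale c (M v)"
    using g x unfolding cholo_on_def by blast
  show "\<exists>L. ((\<lambda>x. f x + g x) has_derivative L) (at x) \<and> (\<forall>c v. L (cscale c v) = cscale c (L v))"
    using has_derivative_add[OF L(1) M(1)] L(2) M(2)
    by (intro exI[of _ "\<lambda>h. L h + M h"]) (auto simp: cscale_add_right)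
qed

lemma cholo_holo:
  fixes f :: "complex \<Rightarrow> complex"
  assumes "open U" "f holomorphic_on U"
  shows "cholo_on U f"
proof (rule cholo_onI[OF assms(1)])
  fix x assume x: "x \<in> U"
  then obtain D where "(f has_field_derivative D) (at x)"
    using assms holomorphic_on_open field_differentiable_def by metis
  then show "\<exists>L. (f has_derivative L) (at x) \<and> (\<forall>c v. L (cscale c v) = cscale c (L v))"
    by (intro exI[of _ "(*) D"]) (auto simp: has_field_derivative_def)
qed

lemma cholo_vec_lambda:
  fixes f :: "'n::finite \<Rightarrow> 'a::csc \<Rightarrow> 'b::csc"
  assumes f: "\<And>i. cholo_on U (f i)" and U: "open U"
  shows "cholo_on U (\<lambda>x. \<chi> i. f i x)"
proof (rule cholo_onI[OF U])
  fix x assume x: "x \<in> U"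
  define L where "L i = frechet_derivative (f i) (at x)" for i
  have Ld: "(f i has_derivative L i) (at x)" for i
    unfolding L_def using cholo_deriv(1)[OF f x] .
  have Lc: "L i (cscale c v) = cscale c (L i v)" for i c v
    unfolding L_def using cholo_deriv(2)[OF f x] .
  have "((\<lambda>x. \<chi> i. f i x) has_derivative (\<lambda>h. \<chi> i. L i h)) (at x within UNIV)"
  proof (subst has_derivative_componentwise_within, intro ballI)
    fix e :: "'b^'n" assume "e \<in> Basis"
    then obtain i b where e: "e = axis i b" "b \<in> Basis" by (auto simp: Basis_vec_def)
    have "((\<lambda>x. f i x \<bullet> b) has_derivative (\<lambda>h. L i h \<bullet> b)) (at x)"
      using has_derivative_compose[OF Ld[of i] bounded_linear.has_derivative[OF bounded_linear_inner_left has_derivative_ident]]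
      by (simp add: o_def)
    then show "((\<lambda>x. (\<chi> i. f i x) \<bullet> e) has_derivative (\<lambda>h. (\<chi> i. L i h) \<bullet> e)) (at x within UNIV)"
      by (simp add: e inner_axis)
  qed
  then show "\<exists>L. ((\<lambda>x. \<chi> i. f i x) has_derivative L) (at x) \<and> (\<forall>c v. L (cscale c v) = cscale c (L v))"
    by (intro exI[of _ "\<lambda>h. \<chi> i. L i h"]) (auto simp: Lc cscale_vec_def)
qed



lemma has_derivative_compose':
  "(f has_derivative f') (at x within s) \<Longrightarrow> (g has_derivative g') (at y) \<Longrightarrow> f x = y \<Longrightarrow>
   ((\<lambda>x. g (f x)) has_derivative (\<lambda>h. g' (f' h))) (at x within s)"
  using has_derivative_compose[of f f' x s g g'] by simp

lemma aug_unf: "aug_map fl \<phi> p = (fst (unf_map fl (fst p, \<phi> (snd p))), snd p)"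
  by (simp add: aug_map_def unf_map_def split_beta)

lemma unf_snd: "snd (unf_map fl p) = snd p"
  by (simp add: unf_map_def split_beta)

lemma unf_fst: "fst (unf_map fl p) = fl (fst p) (snd p)"
  by (simp add: unf_map_def split_beta)

lemma unf_deriv_snd:
  assumes "(unf_map fl has_derivative L) (at p)"
  shows "snd (L h) = snd h"
proof -
  have "((\<lambda>p. snd (unf_map fl p)) has_derivative (\<lambda>h. snd (L h))) (at p)"
    using assms by (rule has_derivative_snd)
  moreover have "((\<lambda>p. snd (unf_map fl p)) has_derivative (\<lambda>h. snd h)) (at p)"
    unfolding unf_snd by (rule has_derivative_snd[OF has_derivative_ident])
  ultimately have "(\<lambda>h. snd (L h)) = (\<lambda>h. snd h)" by (rule has_derivative_unique)
  then show ?thesis by metis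
qed

lemma aug_deriv:
  fixes fl :: "'a::real_normed_vector \<Rightarrow> complex \<Rightarrow> 'b::real_normed_vector"
  assumes L: "(unf_map fl has_derivative L) (at (x, c * z^k))"
  shows "(aug_map fl (\<lambda>z. c * z^k) has_derivative
           (\<lambda>h. (fst (L (fst h, c * of_nat k * z^(k-1) * snd h)), snd h))) (at (x, z))"
proof -
  have d1: "((\<lambda>p::'a\<times>complex. (fst p, c * snd p ^ k)) has_derivative
      (\<lambda>h. (fst h, c * of_nat k * z^(k-1) * snd h))) (at (x, z))"
  proof -
    have "((\<lambda>w. c * w ^ k) has_field_derivative c * (of_nat k * z^(k-1))) (at z)"
      by (auto intro!: derivative_eq_intros)
    then have "((\<lambda>w. c * w ^ k) has_derivative (\<lambda>h. h * (c * (of_nat k * z^(k-1))))) (at z)"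
      by (simp add: has_field_derivative_def mult.commute[of _ "c * _"])
    then have h2: "((\<lambda>w. c * w ^ k) has_derivative (\<lambda>h. h * (c * (of_nat k * z^(k-1))))) (at (snd (x, z)))"
      by simp
    have sd: "(snd has_derivative snd) (at (x, z))" by (rule bounded_linear.has_derivative[OF bounded_linear_snd has_derivative_ident, simplified])
    from has_derivative_compose[OF sd h2]
    have "((\<lambda>p::'a\<times>complex. c * snd p ^ k) has_derivative (\<lambda>h. snd h * (c * (of_nat k * z^(k-1))))) (at (x,z))"
      by (simp add: o_def)
    from has_derivative_Pair[OF has_derivative_fst[OF has_derivative_ident] this]
    show ?thesis by (simp add: algebra_simps)
  qed
  have "((\<lambda>p. unf_map fl (fst p, c * snd p ^ k)) has_derivative
      (\<lambda>h. L (fst h, c * of_nat k * z^(k-1) * snd h))) (at (x, z))"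
    using has_derivative_compose'[OF d1 L] by simp
  from has_derivative_Pair[OF has_derivative_fst[OF this] has_derivative_snd[OF has_derivative_ident]]
  show ?thesis by (simp add: aug_unf[abs_def])
qed

lemma cholo_Phi: "cholo_on UNIV (\<lambda>p::'a::csc \<times> complex. (fst p, c * snd p ^ k))"
proof -
  have h: "cholo_on UNIV (\<lambda>w::complex. c * w ^ k)"
    by (rule cholo_holo) (auto intro!: holomorphic_intros)
  show ?thesis
    by (intro cholo_pair cholo_fst cholo_id cholo_compose[OF cholo_snd[OF cholo_id] h]) auto
qed

lemma cholo_dphi: "cholo_on UNIV (\<lambda>p::'a::csc \<times> complex. c * of_nat k * snd p ^ (k-1))"
proof -
  have h: "cholo_on UNIV (\<lambda>w::complex. c * of_nat k * w ^ (k-1))"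
    by (rule cholo_holo) (auto intro!: holomorphic_intros)
  show ?thesis
    by (intro cholo_compose[OF cholo_snd[OF cholo_id] h]) auto
qed

lemma open_vimage_Phi: "open T \<Longrightarrow> open ((\<lambda>p::'a::csc \<times> complex. (fst p, c * snd p ^ k)) -` T)"
  by (rule open_vimage) (auto intro!: continuous_intros)

lemma hgerm_atE:
  assumes "hgerm_at A f"
  obtains U where "open U" "A \<subseteq> U" "cholo_on U f"
  using assms unfolding hgerm_at_def by blast

lemma geqE:
  assumes "geq A f g"
  obtains U where "open U" "A \<subseteq> U" "\<And>x. x \<in> U \<Longrightarrow> f x = g x"
  using assms unfolding geq_def by blast

lemma dir2:
  fixes fl :: "'a::csc \<Rightarrow> complex \<Rightarrow> 'b::csc" and S :: "'a set"
  assumes Fh: "hgerm_at (S \<times> {0}) (unf_map fl)" and k: "k \<ge> 1"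
    and \<eta>: "\<eta> \<in> Lift (S \<times> {0}) (unf_map fl)"
  shows "\<exists>\<eta>'\<in>Lift (S \<times> {0}) (aug_map fl (\<lambda>z. c * z^k)). pi2_istar \<eta>' = pi2_istar \<eta>"
proof -
  define F where "F = unf_map fl"
  obtain UF where UF: "open UF" "S \<times> {0} \<subseteq> UF" "cholo_on UF F"
    using Fh unfolding F_def by (rule hgerm_atE)
  obtain T\<eta> where T\<eta>: "open T\<eta>" "{0} \<subseteq> T\<eta>" "cholo_on T\<eta> \<eta>"
    using \<eta> unfolding Lift_def by (auto elim: hgerm_atE)
  obtain \<xi> where \<xi>: "hgerm_at (S \<times> {0}) \<xi>" "geq (S \<times> {0}) (tmap F \<xi>) (wmap F \<eta>)"
    using \<eta> unfolding Lift_def F_def by auto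
  obtain U\<xi> where U\<xi>: "open U\<xi>" "S \<times> {0} \<subseteq> U\<xi>" "cholo_on U\<xi> \<xi>"
    using \<xi>(1) by (rule hgerm_atE)
  obtain Ug where Ug: "open Ug" "S \<times> {0} \<subseteq> Ug" "\<And>p. p \<in> Ug \<Longrightarrow> tmap F \<xi> p = wmap F \<eta> p"
    using geqE[OF \<xi>(2)] by metis
  define \<Phi> where "\<Phi> = (\<lambda>p::'a \<times> complex. (fst p, c * snd p ^ k))"
  define \<Phi>t where "\<Phi>t = (\<lambda>p::'b \<times> complex. (fst p, c * snd p ^ k))"
  define dp where "dp z = c * of_nat k * z ^ (k-1)" for z :: complex
  define \<xi>' where "\<xi>' p = (cscale (dp (snd p)) (fst (\<xi> (\<Phi> p))), snd (\<xi> (\<Phi> p)))" for p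
  define \<eta>' where "\<eta>' q = (cscale (dp (snd q)) (fst (\<eta> (\<Phi>t q))), snd (\<eta> (\<Phi>t q)))" for q
  have \<Phi>0: "\<Phi> (s, 0) = (s, 0)" for s using k by (simp add: \<Phi>_def)
  have \<Phi>t0: "\<Phi>t (s, 0) = (s, 0)" for s using k by (simp add: \<Phi>t_def)
  have oU: "open (\<Phi> -` U\<xi>)" unfolding \<Phi>_def by (rule open_vimage_Phi[OF U\<xi>(1)])
  have oT: "open (\<Phi>t -` T\<eta>)" unfolding \<Phi>t_def by (rule open_vimage_Phi[OF T\<eta>(1)])
  have h\<xi>': "hgerm_at (S \<times> {0}) \<xi>'"
    unfolding hgerm_at_def
  proof (intro exI conjI)
    show "open (\<Phi> -` U\<xi>)" unfolding \<Phi>_def by (rule open_vimage_Phi[OF U\<xi>(1)])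
    show "S \<times> {0} \<subseteq> \<Phi> -` U\<xi>" using U\<xi>(2) \<Phi>0 by auto
    have c\<xi>: "cholo_on (\<Phi> -` U\<xi>) (\<lambda>p. \<xi> (\<Phi> p))"
      unfolding \<Phi>_def by (rule cholo_compose[OF cholo_subset[OF cholo_Phi] U\<xi>(3)])
         (use oU in \<open>auto simp: \<Phi>_def\<close>)
    show "cholo_on (\<Phi> -` U\<xi>) \<xi>'"
      unfolding \<xi>'_def dp_def
      by (intro cholo_pair cholo_cscale cholo_fst cholo_snd c\<xi> cholo_subset[OF cholo_dphi])
         (use oU in \<open>auto simp: \<Phi>_def\<close>)
  qed
  have h\<eta>': "hgerm_at {0} \<eta>'"
    unfolding hgerm_at_def
  proof (intro exI conjI)
    show "open (\<Phi>t -` T\<eta>)" unfolding \<Phi>t_def by (rule open_vimage_Phi[OF T\<eta>(1)])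
    show "{0} \<subseteq> \<Phi>t -` T\<eta>" using T\<eta>(2) \<Phi>t0[of 0] by (auto simp: zero_prod_def)
    have c\<eta>: "cholo_on (\<Phi>t -` T\<eta>) (\<lambda>p. \<eta> (\<Phi>t p))"
      unfolding \<Phi>t_def by (rule cholo_compose[OF cholo_subset[OF cholo_Phi] T\<eta>(3)])
         (use oT in \<open>auto simp: \<Phi>t_def\<close>)
    show "cholo_on (\<Phi>t -` T\<eta>) \<eta>'"
      unfolding \<eta>'_def dp_def
      by (intro cholo_pair cholo_cscale cholo_fst cholo_snd c\<eta> cholo_subset[OF cholo_dphi])
         (use oT in \<open>auto simp: \<Phi>t_def\<close>)
  qed
  have geq': "geq (S \<times> {0}) (tmap (aug_map fl (\<lambda>z. c * z^k)) \<xi>') (wmap (aug_map fl (\<lambda>z. c * z^k)) \<eta>')"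
    unfolding geq_def
  proof (intro exI conjI ballI)
    define O3 where "O3 = \<Phi> -` (Ug \<inter> UF)"
    show "open O3" unfolding O3_def \<Phi>_def using Ug(1) UF(1) by (intro open_vimage_Phi) auto
    show "S \<times> {0} \<subseteq> O3" using Ug(2) UF(2) \<Phi>0 by (auto simp: O3_def)
    fix p assume p: "p \<in> O3"
    obtain x z where pxz: "p = (x, z)" by (cases p)
    define P where "P = \<Phi> p"
    have PU: "P \<in> Ug" "P \<in> UF" using p by (auto simp: O3_def P_def)
    define DF where "DF = frechet_derivative F (at P)"
    have DFd: "(F has_derivative DF) (at P)" unfolding DF_def by (rule cholo_deriv(1)[OF UF(3) PU(2)])
    have DFc: "DF (cscale a v) = cscale a (DF v)" for a v
      unfolding DF_def by (rule cholo_deriv(2)[OF UF(3) PU(2)])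
    have DFs: "snd (DF h) = snd h" for h using DFd unfolding F_def by (rule unf_deriv_snd)
    have Pxz: "P = (x, c * z^k)" by (simp add: P_def \<Phi>_def pxz)
    have Ad: "(aug_map fl (\<lambda>z. c * z^k) has_derivative
           (\<lambda>h. (fst (DF (fst h, c * of_nat k * z^(k-1) * snd h)), snd h))) (at (x, z))"
      by (rule aug_deriv) (use DFd Pxz in \<open>simp add: F_def\<close>)
    have Lid: "DF (\<xi> P) = \<eta> (F P)"
      using Ug(3)[OF PU(1)] by (simp add: tmap_def wmap_def DF_def)
    have "tmap (aug_map fl (\<lambda>z. c * z^k)) \<xi>' p =
        (fst (DF (fst (\<xi>' p), c * of_nat k * z^(k-1) * snd (\<xi>' p))), snd (\<xi>' p))"
      using frechet_derivative_at[OF Ad, symmetric] by (simp add: tmap_def pxz)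
    also have "(fst (\<xi>' p), c * of_nat k * z^(k-1) * snd (\<xi>' p)) = cscale (dp z) (\<xi> P)"
      by (simp add: \<xi>'_def pxz P_def dp_def cscale_prod_def)
    also have "DF (cscale (dp z) (\<xi> P)) = cscale (dp z) (\<eta> (F P))" by (simp add: DFc Lid)
    also have "snd (\<xi>' p) = snd (\<eta> (F P))"
      using DFs[of "\<xi> P"] Lid by (simp add: \<xi>'_def P_def)
    also have "(fst (cscale (dp z) (\<eta> (F P))), snd (\<eta> (F P))) = wmap (aug_map fl (\<lambda>z. c * z^k)) \<eta>' p"
    proof -
      have "\<Phi>t (aug_map fl (\<lambda>z. c * z^k) p) = F P"
        by (simp add: \<Phi>t_def aug_map_def F_def unf_map_def pxz Pxz)
      then show ?thesis
        by (simp add: wmap_def \<eta>'_def cscale_fst aug_map_def pxz)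
    qed
    finally show "tmap (aug_map fl (\<lambda>z. c * z^k)) \<xi>' p = wmap (aug_map fl (\<lambda>z. c * z^k)) \<eta>' p" .
  qed
  have "\<eta>' \<in> Lift (S \<times> {0}) (aug_map fl (\<lambda>z. c * z^k))"
    unfolding Lift_def using h\<eta>' h\<xi>' geq' by blast
  moreover have "pi2_istar \<eta>' = pi2_istar \<eta>"
    using k by (intro ext) (simp add: pi2_istar_def \<eta>'_def \<Phi>t_def zero_power)
  ultimately show ?thesis by blast
qed



lemma fst_sum': "fst (sum f A) = sum (\<lambda>x. fst (f x)) A"
  by (induction A rule: infinite_finite_induct) auto
lemma snd_sum': "snd (sum f A) = sum (\<lambda>x. snd (f x)) A"
  by (induction A rule: infinite_finite_induct) auto

lemma cscale_one [simp]: "cscale 1 (v::'a::csc) = v"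
  using cscale_of_real[of 1 v] by simp

lemma cscale_cancel:
  assumes "s \<noteq> 0" "cscale s u = cscale s (v::'a::csc)"
  shows "u = v"
proof -
  have "cscale (1/s * s) u = cscale (1/s * s) v" using assms by (simp only: cscale_mult[symmetric])
  then show ?thesis using assms by simp
qed

lemma cscale_sum: "cscale a (sum f A) = sum (\<lambda>x. cscale a (f x :: 'a::csc)) A"
  by (induction A rule: infinite_finite_induct) (auto simp: cscale_add_right)

lemma core_fst:
  fixes L :: "(complex^('n::finite)) \<times> complex \<Rightarrow> (complex^('p::finite)) \<times> complex"
    and A :: "nat \<Rightarrow> complex^'n" and B :: "nat \<Rightarrow> complex" and C :: "nat \<Rightarrow> complex^'p"
    and \<beta> :: "'n \<Rightarrow> complex" and b :: "'p \<Rightarrow> complex"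
  assumes lin: "linear L" and Lc: "\<And>a v. L (cscale a v) = cscale a (L v)"
    and k: "k \<ge> 1" and z: "z \<noteq> 0" and \<kappa>: "\<kappa> \<noteq> 0" and ck: "ck \<noteq> 0"
    and V: "\<And>j. j < k \<Longrightarrow> fst (L (A j, ck * (rou k ^ j * z)^(k-1) * B j)) = C j"
    and \<beta>id: "\<And>i. z^(k-1) * \<beta> i = (\<kappa> / of_nat k) * (\<Sum>j<k. (rou k ^ j)^(k-(k-1)) * (A j $ i))"
    and \<alpha>id: "z^0 * \<alpha> = (\<kappa> / of_nat k) * (\<Sum>j<k. (rou k ^ j)^(k-0) * B j)"
    and bid: "\<And>i. z^(k-1) * b i = (\<kappa> / of_nat k) * (\<Sum>j<k. (rou k ^ j)^(k-(k-1)) * (C j $ i))"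
  shows "fst (L ((\<chi> i. \<beta> i), ck * \<alpha>)) = (\<chi> i. b i)"
proof -
  define s where "s = of_nat k / \<kappa> * z^(k-1)"
  have s0: "s \<noteq> 0" using k z \<kappa> by (simp add: s_def)
  have kk: "k - (k-1) = 1" using k by simp
  define Vs where "Vs = (\<Sum>j<k. cscale (rou k ^ j) (A j, ck * (rou k ^ j * z)^(k-1) * B j))"
  have Vs: "Vs = cscale s ((\<chi> i. \<beta> i), ck * \<alpha>)"
  proof (rule prod_eqI)
    show "fst Vs = fst (cscale s ((\<chi> i. \<beta> i), ck * \<alpha>))"
    proof (subst vec_eq_iff, intro allI)
      fix i
      have "fst Vs $ i = (\<Sum>j<k. rou k ^ j * (A j $ i))"
        by (simp add: Vs_def fst_sum' cscale_prod_def cscale_vec_def)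
      also have "\<dots> = s * \<beta> i" using \<beta>id[of i] k \<kappa> unfolding kk s_def by (simp add: field_simps)
      finally show "fst Vs $ i = fst (cscale s ((\<chi> i. \<beta> i), ck * \<alpha>)) $ i"
        by (simp add: cscale_prod_def cscale_vec_def)
    qed
    have eqj: "rou k ^ j * (ck * (rou k ^ j * z)^(k-1) * B j) = ck * z^(k-1) * ((rou k ^ j)^k * B j)" for j
    proof -
      have "(rou k ^ j)^k = rou k ^ j * (rou k ^ j)^(k-1)" using k by (simp add: power_eq_if)
      then show ?thesis by (simp only: power_mult_distrib mult_ac)
    qed
    have "snd Vs = (\<Sum>j<k. rou k ^ j * (ck * (rou k ^ j * z)^(k-1) * B j))"
      by (simp add: Vs_def snd_sum' cscale_prod_def)
    also have "\<dots> = (\<Sum>j<k. ck * z^(k-1) * ((rou k ^ j)^k * B j))"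
      by (rule sum.cong[OF refl]) (rule eqj)
    also have "\<dots> = ck * z^(k-1) * (\<Sum>j<k. (rou k ^ j)^k * B j)" by (simp add: sum_distrib_left)
    also have "\<dots> = s * (ck * \<alpha>)" using \<alpha>id k \<kappa> by (simp add: s_def field_simps)
    finally show "snd Vs = snd (cscale s ((\<chi> i. \<beta> i), ck * \<alpha>))" by (simp add: cscale_prod_def)
  qed
  have "L Vs = (\<Sum>j<k. cscale (rou k ^ j) (L (A j, ck * (rou k ^ j * z)^(k-1) * B j)))"
    unfolding Vs_def by (simp add: linear_sum[OF lin] Lc)
  then have "fst (L Vs) = (\<Sum>j<k. cscale (rou k ^ j) (C j))"
    using V by (simp add: fst_sum' cscale_fst)
  also have "\<dots> = cscale s (\<chi> i. b i)"
  proof (subst vec_eq_iff, intro allI)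
    fix i
    have "(\<Sum>j<k. cscale (rou k ^ j) (C j)) $ i = (\<Sum>j<k. rou k ^ j * (C j $ i))"
      by (simp add: cscale_vec_def)
    also have "\<dots> = s * b i" using bid[of i] k \<kappa> unfolding kk s_def by (simp add: field_simps)
    finally show "(\<Sum>j<k. cscale (rou k ^ j) (C j)) $ i = cscale s (\<chi> i. b i) $ i"
      by (simp add: cscale_vec_def)
  qed
  finally have "cscale s (fst (L ((\<chi> i. \<beta> i), ck * \<alpha>))) = cscale s (\<chi> i. b i)"
    unfolding Vs Lc cscale_fst .
  then show ?thesis using s0 by (rule cscale_cancel[rotated])
qed

lemma linear_basis_expand:
  fixes L :: "'a::euclidean_space \<Rightarrow> 'b::real_vector"
  assumes "linear L"
  shows "L v = (\<Sum>b\<in>Basis. (v \<bullet> b) *\<^sub>R L b)"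
proof -
  have "L v = L (\<Sum>b\<in>Basis. (v \<bullet> b) *\<^sub>R b)" by (simp add: euclidean_representation)
  also have "\<dots> = (\<Sum>b\<in>Basis. (v \<bullet> b) *\<^sub>R L b)"
    by (simp add: linear_sum[OF assms] linear_scale[OF assms])
  finally show ?thesis .
qed

lemma deriv_apply_cont_scalar:
  fixes g :: "'a::csc \<Rightarrow> complex"
  assumes g: "cholo_on U g" and \<xi>: "continuous_on U \<xi>"
  shows "continuous_on U (\<lambda>p. frechet_derivative g (at p) (\<xi> p))"
proof -
  have "continuous_on U (\<lambda>p. \<Sum>b\<in>Basis. (\<xi> p \<bullet> b) *\<^sub>R frechet_derivative g (at p) b)"
    by (intro continuous_intros \<xi> cholo_deriv_cont[OF g])
  moreover have "frechet_derivative g (at p) (\<xi> p) = (\<Sum>b\<in>Basis. (\<xi> p \<bullet> b) *\<^sub>R frechet_derivative g (at p) b)"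
    if "p \<in> U" for p
    by (rule linear_basis_expand[OF linear_frechet_cholo[OF g that]])
  ultimately show ?thesis by (metis (no_types, lifting) continuous_on_eq)
qed

lemma deriv_apply_cont:
  fixes F :: "'a::csc \<Rightarrow> (complex^('p::finite)) \<times> complex"
  assumes F: "cholo_on U F" and \<xi>: "continuous_on U \<xi>"
  shows "continuous_on U (\<lambda>p. frechet_derivative F (at p) (\<xi> p))"
proof -
  define G where "G i p = fst (F p) $ i" for i p
  define Gz where "Gz p = snd (F p)" for p
  have cG: "cholo_on U (G i)" for i unfolding G_def[abs_def] by (intro cholo_nth cholo_fst F)
  have cGz: "cholo_on U Gz" unfolding Gz_def[abs_def] by (intro cholo_snd F)
  have eq: "frechet_derivative F (at p) h = ((\<chi> i. frechet_derivative (G i) (at p) h), frechet_derivative Gz (at p) h)"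
    if p: "p \<in> U" for p h
  proof -
    have d: "(F has_derivative frechet_derivative F (at p)) (at p)" by (rule cholo_deriv(1)[OF F p])
    have "(G i has_derivative (\<lambda>h. fst (frechet_derivative F (at p) h) $ i)) (at p)" for i
      unfolding G_def[abs_def]
      by (rule bounded_linear.has_derivative[OF bounded_linear_vec_nth has_derivative_fst[OF d]])
    then have e1: "frechet_derivative (G i) (at p) = (\<lambda>h. fst (frechet_derivative F (at p) h) $ i)" for i
      by (metis frechet_derivative_at)
    have "(Gz has_derivative (\<lambda>h. snd (frechet_derivative F (at p) h))) (at p)"
      unfolding Gz_def[abs_def] by (rule has_derivative_snd[OF d])
    then have e2: "frechet_derivative Gz (at p) = (\<lambda>h. snd (frechet_derivative F (at p) h))"
      by (metis frechet_derivative_at)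
    show ?thesis by (simp add: e1 e2 vec_eq_iff)
  qed
  have "continuous_on U (\<lambda>p. ((\<chi> i. frechet_derivative (G i) (at p) (\<xi> p)), frechet_derivative Gz (at p) (\<xi> p)))"
    by (intro continuous_intros deriv_apply_cont_scalar cG cGz \<xi>)
  then show ?thesis by (rule continuous_on_eq) (simp add: eq)
qed

lemma eq_from_nonzero:
  fixes f g :: "'a::real_normed_vector \<times> complex \<Rightarrow> 'c::real_normed_vector"
  assumes D: "open D" and f: "continuous_on D f" and g: "continuous_on D g"
    and nz: "\<And>p. p \<in> D \<Longrightarrow> snd p \<noteq> 0 \<Longrightarrow> f p = g p" and p: "p \<in> D"
  shows "f p = g p"
proof (cases "snd p = 0")
  case False then show ?thesis using nz p by blast
next
  case True
  obtain x where px: "p = (x, 0)" using True by (cases p) auto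
  define q where "q n = (x, 1 / of_nat (Suc n) :: complex)" for n :: nat
  have qlim: "q \<longlonglongrightarrow> p"
    unfolding q_def px
    by (intro tendsto_intros LIMSEQ_Suc[OF lim_1_over_n])
  have ev: "eventually (\<lambda>n. q n \<in> D) sequentially"
    using qlim D p by (rule topological_tendstoD)
  have fl: "(\<lambda>n. f (q n)) \<longlonglongrightarrow> f p"
    using continuous_on_tendsto_compose[OF f qlim p ev] .
  have gl: "(\<lambda>n. g (q n)) \<longlonglongrightarrow> g p"
    using continuous_on_tendsto_compose[OF g qlim p ev] .
  have "eventually (\<lambda>n. f (q n) = g (q n)) sequentially"
    using ev by eventually_elim (auto intro!: nz simp: q_def simp del: of_nat_Suc)
  then have "(\<lambda>n. g (q n)) \<longlonglongrightarrow> f p" using fl by (rule Lim_transform_eventually[rotated]) 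
  then show ?thesis using gl LIMSEQ_unique by blast
qed



lemma finite_uniform:
  assumes "finite S" "\<And>s. s \<in> S \<Longrightarrow> \<exists>e>0. P s e"
    and mono: "\<And>s e e'. P s e \<Longrightarrow> 0 < e' \<Longrightarrow> e' \<le> e \<Longrightarrow> P s e'"
  shows "\<exists>e>0. \<forall>s\<in>S. P s (e::real)"
  using assms(1,2)
proof (induction S rule: finite_induct)
  case empty then show ?case by (auto intro: exI[of _ 1])
next
  case (insert a F)
  obtain e1 where e1: "e1 > 0" "\<forall>s\<in>F. P s e1" using insert by auto
  obtain e2 where e2: "e2 > 0" "P a e2" using insert by auto
  show ?case using e1 e2 by (intro exI[of _ "min e1 e2"]) (auto intro: mono)
qed

lemma complex_root_exists:
  assumes "k \<ge> 1"
  shows "\<exists>z::complex. z^k = w"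
proof (cases "w = 0")
  case True then show ?thesis using assms by (intro exI[of _ 0]) auto
next
  case False
  have "exp (Ln w / of_nat k) ^ k = exp (of_nat k * (Ln w / of_nat k))"
    by (rule exp_of_nat_mult[symmetric])
  also have "of_nat k * (Ln w / of_nat k) = Ln w" using assms by simp
  also have "exp (Ln w) = w" using False by simp
  finally show ?thesis by blast
qed

lemma norm_pair_le:
  fixes x :: "'a::real_normed_vector" and y :: "'b::real_normed_vector"
  shows "norm (x, y) \<le> norm x + norm y"
proof -
  have "(norm x)\<^sup>2 + (norm y)\<^sup>2 \<le> (norm x + norm y)\<^sup>2"
    by (simp add: power2_eq_square algebra_simps)
  then have "sqrt ((norm x)\<^sup>2 + (norm y)\<^sup>2) \<le> sqrt ((norm x + norm y)\<^sup>2)"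
    by (rule real_sqrt_le_mono)
  then show ?thesis by (simp add: norm_Pair)
qed

lemma dir1:
  fixes fl :: "complex^('n::finite) \<Rightarrow> complex \<Rightarrow> complex^('p::finite)" and S :: "(complex^'n) set"
  assumes fin: "finite S" and Fh: "hgerm_at (S \<times> {0}) (unf_map fl)"
    and fl0: "\<And>s. s \<in> S \<Longrightarrow> fl s 0 = 0" and k: "k \<ge> 1" and c: "c \<noteq> 0"
    and \<eta>': "\<eta>' \<in> Lift (S \<times> {0}) (aug_map fl (\<lambda>z. c * z^k))"
  shows "\<exists>\<eta>\<in>Lift (S \<times> {0}) (unf_map fl). geq {0} (pi2_istar \<eta>') (pi2_istar \<eta>)"
proof -
  define F where "F = unf_map fl"
  define Af where "Af = aug_map fl (\<lambda>z. c * z^k)"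
  obtain UF where UF: "open UF" "S \<times> {0} \<subseteq> UF" "cholo_on UF F"
    using Fh unfolding F_def by (rule hgerm_atE)
  obtain T where T: "open T" "{0} \<subseteq> T" "cholo_on T \<eta>'"
    using \<eta>' unfolding Lift_def by (auto elim: hgerm_atE)
  obtain \<xi>' where \<xi>': "hgerm_at (S \<times> {0}) \<xi>'" "geq (S \<times> {0}) (tmap Af \<xi>') (wmap Af \<eta>')"
    using \<eta>' unfolding Lift_def Af_def by auto
  obtain U\<xi> where U\<xi>: "open U\<xi>" "S \<times> {0} \<subseteq> U\<xi>" "cholo_on U\<xi> \<xi>'"
    using \<xi>'(1) by (rule hgerm_atE)
  obtain Ug where Ug: "open Ug" "S \<times> {0} \<subseteq> Ug" "\<And>p. p \<in> Ug \<Longrightarrow> tmap Af \<xi>' p = wmap Af \<eta>' p"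
    using geqE[OF \<xi>'(2)] by metis
  obtain \<epsilon> where \<epsilon>: "\<epsilon> > 0" "ball 0 \<epsilon> \<subseteq> T"
    using T open_contains_ball by blast
  define \<rho> where "\<rho> = \<epsilon> / 2"
  define R where "R = \<epsilon> / 2"
  have \<rho>: "\<rho> > 0" and R: "R > 0" using \<epsilon> by (auto simp: \<rho>_def R_def)
  have TR: "(X, \<zeta>) \<in> T" if "X \<in> ball 0 \<rho>" "norm \<zeta> \<le> R" for X \<zeta>
  proof -
    have "norm (X, \<zeta>) < \<epsilon>"
      using norm_pair_le[of X \<zeta>] that by (auto simp: \<rho>_def R_def)
    then show ?thesis using \<epsilon> by (auto simp: zero_prod_def[symmetric])
  qed
  have contF: "continuous_on UF F" by (rule cholo_continuous_on[OF UF(3)])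
  define W where "W = U\<xi> \<inter> Ug \<inter> (UF \<inter> (\<lambda>p. fst (F p)) -` ball 0 \<rho>)"
  have oW: "open W"
  proof -
    have "open ((\<lambda>p. fst (F p)) -` ball 0 \<rho> \<inter> UF)"
      using continuous_on_open_vimage[OF UF(1)] contF
      by (metis continuous_on_fst open_ball)
    then show ?thesis unfolding W_def using U\<xi>(1) Ug(1) by (auto simp: Int_commute)
  qed
  have sW: "(s, 0) \<in> W" if "s \<in> S" for s
    using that U\<xi>(2) Ug(2) UF(2) fl0 \<rho> by (auto simp: W_def F_def unf_map_def)
  obtain \<delta> where \<delta>: "\<delta> > 0" "\<forall>s\<in>S. cball s \<delta> \<times> cball 0 \<delta> \<subseteq> W"
  proof -
    have "\<exists>e>0. \<forall>s\<in>S. cball s e \<times> cball 0 e \<subseteq> W"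
    proof (rule finite_uniform[OF fin])
      fix s assume s: "s \<in> S"
      obtain e where e: "e > 0" "ball (s, 0) e \<subseteq> W" using oW sW[OF s] open_contains_ball by blast
      show "\<exists>e>0. cball s e \<times> cball 0 e \<subseteq> W"
      proof (intro exI conjI)
        show "e/3 > 0" using e by simp
        show "cball s (e/3) \<times> cball 0 (e/3) \<subseteq> W"
        proof
          fix q assume q: "q \<in> cball s (e/3) \<times> cball (0::complex) (e/3)"
          obtain x \<zeta> where qx: "q = (x, \<zeta>)" by (cases q)
          have "norm (x - s, \<zeta>) \<le> norm (x - s) + norm \<zeta>" by (rule norm_pair_le)
          also have "\<dots> < e" using q e by (auto simp: qx dist_norm norm_minus_commute)
          finally have "dist q (s, 0) < e" by (simp add: qx dist_norm)
          then show "q \<in> W" using e by (auto simp: dist_commute)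
        qed
      qed
    qed (auto intro: order_trans)
    then show ?thesis using that by blast
  qed
  define Y where "Y = (\<Union>s\<in>S. ball s \<delta>)"
  have oY: "open Y" by (simp add: Y_def open_UN)
  have YW: "(x, \<zeta>) \<in> W" if "x \<in> Y" "norm \<zeta> \<le> \<delta>" for x \<zeta>
    using that \<delta>(2) by (fastforce simp: Y_def)
  define \<delta>1 where "\<delta>1 = min \<delta> (min (norm c * \<delta>^k) (norm c * R^k))"
  have \<delta>1: "\<delta>1 > 0" using \<delta> R c by (simp add: \<delta>1_def)
  define \<kappa> where "\<kappa> = 2 * pi * \<i>"
  define ck where "ck = c * of_nat k"
  have \<kappa>0: "\<kappa> \<noteq> 0" by (simp add: \<kappa>_def)
  have ck0: "ck \<noteq> 0" using c k by (simp add: ck_def)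
  define gx where "gx i p = fst (\<xi>' p) $ i" for i p
  define gz where "gz p = snd (\<xi>' p)" for p
  define hx where "hx i q = fst (\<eta>' q) $ i" for i q
  define hz where "hz q = snd (\<eta>' q)" for q
  have cgx: "cholo_on U\<xi> (gx i)" for i unfolding gx_def[abs_def] by (intro cholo_nth cholo_fst U\<xi>(3))
  have cgz: "cholo_on U\<xi> gz" unfolding gz_def[abs_def] by (intro cholo_snd U\<xi>(3))
  have chx: "cholo_on T (hx i)" for i unfolding hx_def[abs_def] by (intro cholo_nth cholo_fst T(3))
  have chz: "cholo_on T hz" unfolding hz_def[abs_def] by (intro cholo_snd T(3))
  have YU: "(y, \<zeta>) \<in> U\<xi>" if "y \<in> Y" "norm \<zeta> \<le> \<delta>" for y \<zeta>
    using YW[OF that] by (simp add: W_def)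
  define \<beta> where "\<beta> i = Rop (gx i) \<delta> k 0" for i
  define \<alpha> where "\<alpha> = Rop gz \<delta> k (k-1)"
  define b where "b i = Rop (hx i) R k 0" for i
  define a where "a = Rop hz R k (k-1)"
  have c\<beta>: "cholo_on (Y \<times> ball 0 (\<delta>^k)) (\<beta> i)" for i
    unfolding \<beta>_def by (rule Rop_cholo[OF cgx oY \<delta>(1) YU])
  have c\<alpha>: "cholo_on (Y \<times> ball 0 (\<delta>^k)) \<alpha>"
    unfolding \<alpha>_def by (rule Rop_cholo[OF cgz oY \<delta>(1) YU])
  have cb: "cholo_on (ball 0 \<rho> \<times> ball 0 (R^k)) (b i)" for i
    unfolding b_def by (rule Rop_cholo[OF chx open_ball R TR])
  have ca: "cholo_on (ball 0 \<rho> \<times> ball 0 (R^k)) a"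
    unfolding a_def by (rule Rop_cholo[OF chz open_ball R TR])
  define Ms where "Ms = (\<lambda>p::(complex^'n) \<times> complex. (fst p, snd p / c))"
  define Mt where "Mt = (\<lambda>p::(complex^'p) \<times> complex. (fst p, snd p / c))"
  have cMs: "cholo_on UNIV Ms" unfolding Ms_def divide_inverse
    by (intro cholo_pair cholo_fst cholo_id cholo_mult cholo_snd cholo_const) auto
  have cMt: "cholo_on UNIV Mt" unfolding Mt_def divide_inverse
    by (intro cholo_pair cholo_fst cholo_id cholo_mult cholo_snd cholo_const) auto
  define \<xi> where "\<xi> p = (cscale (1 / (ck * \<kappa>)) (\<chi> i. \<beta> i (Ms p)), \<alpha> (Ms p) / \<kappa>)" for p
  define \<eta> where "\<eta> q = (cscale (1 / (ck * \<kappa>)) (\<chi> i. b i (Mt q)), a (Mt q) / \<kappa>)" for q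
  define D\<xi> where "D\<xi> = Ms -` (Y \<times> ball 0 (\<delta>^k))"
  define D\<eta> where "D\<eta> = Mt -` (ball 0 \<rho> \<times> ball 0 (R^k))"
  have oD\<xi>: "open D\<xi>" unfolding D\<xi>_def Ms_def using oY c
    by (intro open_vimage open_Times) (auto intro!: continuous_intros)
  have oD\<eta>: "open D\<eta>" unfolding D\<eta>_def Mt_def using c
    by (intro open_vimage open_Times) (auto intro!: continuous_intros)
  have c\<xi>: "cholo_on D\<xi> \<xi>"
  proof -
    have m: "cholo_on D\<xi> Ms" by (rule cholo_subset[OF cMs oD\<xi>]) auto
    show ?thesis unfolding \<xi>_def[abs_def] divide_inverse[of "\<alpha> _"]
      by (intro cholo_pair cholo_cscale cholo_const oD\<xi> cholo_vec_lambda
          cholo_compose[OF m c\<beta>] cholo_mult cholo_compose[OF m c\<alpha>])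
         (auto simp: D\<xi>_def divide_inverse)
  qed
  have c\<eta>: "cholo_on D\<eta> \<eta>"
  proof -
    have m: "cholo_on D\<eta> Mt" by (rule cholo_subset[OF cMt oD\<eta>]) auto
    show ?thesis unfolding \<eta>_def[abs_def] divide_inverse[of "a _"]
      by (intro cholo_pair cholo_cscale cholo_const oD\<eta> cholo_vec_lambda
          cholo_compose[OF m cb] cholo_mult cholo_compose[OF m ca])
         (auto simp: D\<eta>_def divide_inverse)
  qed
  have SY: "S \<subseteq> Y" using \<delta>(1) by (force simp: Y_def)
  have SD\<xi>: "S \<times> {0} \<subseteq> D\<xi>" using \<delta>(1) SY by (auto simp: D\<xi>_def Ms_def)
  have h\<xi>: "hgerm_at (S \<times> {0}) \<xi>" unfolding hgerm_at_def using oD\<xi> SD\<xi> c\<xi> by blast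
  have h\<eta>: "hgerm_at {0} \<eta>" unfolding hgerm_at_def
    using oD\<eta> c\<eta> \<rho> R by (intro exI[of _ D\<eta>]) (auto simp: D\<eta>_def Mt_def zero_prod_def)
  define D where "D = Y \<times> ball (0::complex) \<delta>1"
  have oD: "open D" using oY by (simp add: D_def open_Times)
  have SD: "S \<times> {0} \<subseteq> D" using \<delta>1 SY by (auto simp: D_def)
  have DW: "p \<in> W" if "p \<in> D" for p
    using that YW[of "fst p" "snd p"] by (auto simp: D_def \<delta>1_def)
  have DD\<xi>: "p \<in> D\<xi>" if "p \<in> D" for p
  proof -
    have "norm (snd p) < norm c * \<delta>^k" using that by (auto simp: D_def \<delta>1_def)
    then show ?thesis using that c by (auto simp: D\<xi>_def Ms_def D_def norm_divide field_simps)
  qed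
  have FD\<eta>: "F p \<in> D\<eta>" if "p \<in> D" for p
  proof -
    have "norm (snd p) < norm c * R^k" using that by (auto simp: D_def \<delta>1_def)
    moreover have "norm (fst (F p)) < \<rho>" using DW[OF that] by (auto simp: W_def)
    ultimately show ?thesis using c
      by (auto simp: D\<eta>_def Mt_def F_def unf_map_def split_beta norm_divide field_simps)
  qed
  have nz_id: "tmap F \<xi> p = wmap F \<eta> p" if p: "p \<in> D" "snd p \<noteq> 0" for p
  proof -
    obtain x l where pxl: "p = (x, l)" by (cases p)
    have x: "x \<in> Y" and l: "norm l < \<delta>1" "l \<noteq> 0" using p by (auto simp: pxl D_def)
    obtain z where zk: "z^k = l / c" using complex_root_exists[OF k] by blast
    have z0: "z \<noteq> 0" using zk l(2) c k by (auto simp: zero_power)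
    have nzk: "norm z ^ k = norm l / norm c" using zk by (metis norm_divide norm_power)
    have z\<delta>: "norm z < \<delta>"
    proof -
      have "norm z ^ k < \<delta> ^ k" using l(1) c unfolding nzk by (simp add: \<delta>1_def field_simps)
      then show ?thesis using \<delta>(1) power_less_imp_less_base by fastforce
    qed
    have zR: "norm z < R"
    proof -
      have "norm z ^ k < R ^ k" using l(1) c unfolding nzk by (simp add: \<delta>1_def field_simps)
      then show ?thesis using R power_less_imp_less_base by fastforce
    qed
    define X0 where "X0 = fl x l"
    have pW: "p \<in> W" by (rule DW[OF p(1)])
    have X0: "X0 \<in> ball 0 \<rho>" using pW by (simp add: W_def X0_def F_def unf_map_def pxl)
    have pUF: "p \<in> UF" using pW by (simp add: W_def)
    define DF where "DF = frechet_derivative F (at p)"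
    have DFd: "(F has_derivative DF) (at p)" unfolding DF_def by (rule cholo_deriv(1)[OF UF(3) pUF])
    have DFc: "DF (cscale a v) = cscale a (DF v)" for a v
      unfolding DF_def by (rule cholo_deriv(2)[OF UF(3) pUF])
    have DFs: "snd (DF h) = snd h" for h using DFd unfolding F_def by (rule unf_deriv_snd)
    have DFl: "linear DF" using DFd has_derivative_linear by blast
    define w where "w j = rou k ^ j * z" for j
    have nw: "norm (w j) = norm z" for j by (simp add: w_def norm_mult)
    have wk: "c * (w j)^k = l" for j using k c by (simp add: w_def power_mult_distrib zk)
    have pjW: "(x, w j) \<in> W" for j using YW[OF x] nw z\<delta> by (simp add: less_imp_le)
    have AfD: "frechet_derivative Af (at (x, w j)) =
        (\<lambda>h. (fst (DF (fst h, ck * (w j)^(k-1) * snd h)), snd h))" for j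
    proof -
      have "(unf_map fl has_derivative DF) (at (x, c * (w j)^k))"
        using DFd by (simp add: wk pxl F_def)
      from aug_deriv[OF this] show ?thesis
        unfolding Af_def ck_def by (rule frechet_derivative_at[symmetric])
    qed
    have Afw: "Af (x, w j) = (X0, w j)" for j by (simp add: Af_def aug_map_def wk X0_def)
    have Aid: "(fst (DF (fst (\<xi>' (x, w j)), ck * (w j)^(k-1) * snd (\<xi>' (x, w j)))), snd (\<xi>' (x, w j)))
        = \<eta>' (X0, w j)" for j
      using Ug(3)[of "(x, w j)"] pjW by (simp add: W_def tmap_def wmap_def AfD Afw)
    have Vj: "fst (DF (fst (\<xi>' (x, w j)), ck * (rou k ^ j * z)^(k-1) * snd (\<xi>' (x, w j)))) = fst (\<eta>' (X0, w j))" for j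
      using arg_cong[OF Aid[of j], of fst] unfolding w_def by (simp only: fst_conv)
    have Sj: "snd (\<xi>' (x, w j)) = snd (\<eta>' (X0, w j))" for j
      using arg_cong[OF Aid[of j], of snd] by (simp only: snd_conv)
    have km: "k - 1 - (k - 1) = 0" by simp
    have \<beta>id: "z^(k-1) * \<beta> i (x, z^k) = (\<kappa> / of_nat k) * (\<Sum>j<k. (rou k ^ j)^(k-(k-1)) * (fst (\<xi>' (x, w j)) $ i))" for i
      using Rop_identity[OF cgx \<delta>(1) YU[OF x] k _ _, of "k-1" z] z\<delta> k
      unfolding km by (simp add: \<beta>_def \<kappa>_def gx_def w_def)
    have \<alpha>id: "z^0 * \<alpha> (x, z^k) = (\<kappa> / of_nat k) * (\<Sum>j<k. (rou k ^ j)^(k-0) * snd (\<xi>' (x, w j)))"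
      using Rop_identity[OF cgz \<delta>(1) YU[OF x] k _ _, of 0 z] z\<delta> k
      by (simp add: \<alpha>_def \<kappa>_def gz_def w_def)
    have bid: "z^(k-1) * b i (X0, z^k) = (\<kappa> / of_nat k) * (\<Sum>j<k. (rou k ^ j)^(k-(k-1)) * (fst (\<eta>' (X0, w j)) $ i))" for i
      using Rop_identity[OF chx R TR[OF X0] k _ _, of "k-1" z] zR k
      unfolding km by (simp add: b_def \<kappa>_def hx_def w_def)
    have aid: "z^0 * a (X0, z^k) = (\<kappa> / of_nat k) * (\<Sum>j<k. (rou k ^ j)^(k-0) * snd (\<eta>' (X0, w j)))"
      using Rop_identity[OF chz R TR[OF X0] k _ _, of 0 z] zR k
      by (simp add: a_def \<kappa>_def hz_def w_def)
    have \<alpha>a: "\<alpha> (x, z^k) = a (X0, z^k)" using \<alpha>id aid Sj by simp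
    have core: "fst (DF ((\<chi> i. \<beta> i (x, z^k)), ck * \<alpha> (x, z^k))) = (\<chi> i. b i (X0, z^k))"
      by (rule core_fst[OF DFl DFc k z0 \<kappa>0 ck0 Vj \<beta>id \<alpha>id bid])
    have Msp: "Ms p = (x, z^k)" by (simp add: Ms_def pxl zk)
    have \<xi>p: "\<xi> p = cscale (1 / (ck * \<kappa>)) ((\<chi> i. \<beta> i (x, z^k)), ck * \<alpha> (x, z^k))"
      using ck0 by (simp add: \<xi>_def Msp cscale_prod_def)
    have Fp: "F p = (X0, l)" by (simp add: F_def unf_map_def pxl X0_def)
    have Mt: "Mt (X0, l) = (X0, z^k)" by (simp add: Mt_def zk)
    have "tmap F \<xi> p = cscale (1 / (ck * \<kappa>)) (DF ((\<chi> i. \<beta> i (x, z^k)), ck * \<alpha> (x, z^k)))"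
      by (simp add: tmap_def DF_def[symmetric] \<xi>p DFc)
    also have "\<dots> = (cscale (1 / (ck * \<kappa>)) (\<chi> i. b i (X0, z^k)), a (X0, z^k) / \<kappa>)"
    proof -
      have core': "fst (DF ((\<chi> i. \<beta> i (x, z^k)), ck * a (X0, z^k))) = (\<chi> i. b i (X0, z^k))"
        using core \<alpha>a by simp
      show ?thesis using ck0 by (simp add: cscale_prod_def core' DFs \<alpha>a)
    qed
    also have "\<dots> = wmap F \<eta> p" by (simp add: wmap_def Fp \<eta>_def Mt)
    finally show ?thesis .
  qed
  have DUF: "D \<subseteq> UF" using DW by (auto simp: W_def)
  have all_id: "tmap F \<xi> p = wmap F \<eta> p" if "p \<in> D" for p
  proof (rule eq_from_nonzero[OF oD _ _ nz_id that])
    have cF: "cholo_on D F" by (rule cholo_subset[OF UF(3) oD DUF])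
    have c\<xi>D: "continuous_on D \<xi>"
      by (rule continuous_on_subset[OF cholo_continuous_on[OF c\<xi>]]) (use DD\<xi> in auto)
    show "continuous_on D (tmap F \<xi>)"
      unfolding tmap_def by (rule deriv_apply_cont[OF cF c\<xi>D])
    show "continuous_on D (wmap F \<eta>)"
      unfolding wmap_def o_def
      by (rule continuous_on_compose2[OF cholo_continuous_on[OF c\<eta>] cholo_continuous_on[OF cF]])
         (use FD\<eta> in auto)
  qed
  have geqF: "geq (S \<times> {0}) (tmap F \<xi>) (wmap F \<eta>)"
    unfolding geq_def using oD SD all_id by blast
  have inL: "\<eta> \<in> Lift (S \<times> {0}) (unf_map fl)"
    unfolding Lift_def using h\<eta> h\<xi> geqF by (auto simp: F_def)
  have "geq {0} (pi2_istar \<eta>') (pi2_istar \<eta>)"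
    unfolding geq_def
  proof (intro exI[of _ "ball 0 \<rho>"] conjI ballI)
    show "open (ball 0 \<rho>)" by simp
    show "{0} \<subseteq> ball 0 \<rho>" using \<rho> by simp
    fix X assume X: "X \<in> ball (0::complex^'p) \<rho>"
    have "0^0 * a (X, 0^k) = (\<kappa> / of_nat k) * (\<Sum>j<k. (rou k ^ j)^(k-0) * hz (X, rou k ^ j * 0))"
      using Rop_identity[OF chz R TR[OF X] k _ _, of 0 0] R k by (simp add: a_def \<kappa>_def)
    then have "a (X, 0) = \<kappa> * hz (X, 0)" using k by (simp add: zero_power)
    then show "pi2_istar \<eta>' X = pi2_istar \<eta> X"
      using \<kappa>0 by (simp add: pi2_istar_def \<eta>_def Mt_def hz_def)
  qed
  then show ?thesis using inL by blast
qed

theorem mainTheorem4: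
  fixes S :: "(complex^'n) set" and f :: "complex^'n \<Rightarrow> complex^'p"
    and fl :: "complex^'n \<Rightarrow> complex \<Rightarrow> complex^'p" and \<phi> :: "complex \<Rightarrow> complex"
  assumes "finite S"
    and "CARD('p) \<le> CARD('n) + 1"
    and "map_germ S f"
    and "is_unfolding S f fl"
    and "stable_germ (S \<times> {0}) (unf_map fl)"
    and "quasihom1 \<phi>"
  shows "germ_set_eq {0} (pi2_istar ` Lift (S \<times> {0}) (aug_map fl \<phi>))
                         (pi2_istar ` Lift (S \<times> {0}) (unf_map fl))"
proof -
  obtain c k where ck: "c \<noteq> 0" "k \<ge> 1" "\<phi> = (\<lambda>z. c * z ^ k)"
    using assms(6) unfolding quasihom1_def by blast
  have Fh: "hgerm_at (S \<times> {0}) (unf_map fl)" using assms(4) by (simp add: is_unfolding_def)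
  have fl0: "fl s 0 = 0" if "s \<in> S" for s
  proof -
    obtain U where "open U" "S \<subseteq> U" "\<And>x. x \<in> U \<Longrightarrow> fl x 0 = f x"
      using assms(4) unfolding is_unfolding_def geq_def by blast
    then show ?thesis using that assms(3) by (auto simp: map_germ_def)
  qed
  have geq_refl: "geq A g g" for A and g :: "complex^'p \<Rightarrow> complex"
    unfolding geq_def by (intro exI[of _ UNIV]) auto
  show ?thesis
    unfolding germ_set_eq_def
  proof (intro conjI ballI)
    fix g assume "g \<in> pi2_istar ` Lift (S \<times> {0}) (aug_map fl \<phi>)"
    then obtain \<eta>' where \<eta>': "\<eta>' \<in> Lift (S \<times> {0}) (aug_map fl (\<lambda>z. c * z ^ k))" "g = pi2_istar \<eta>'"
      using ck(3) by auto
    obtain \<eta> where "\<eta> \<in> Lift (S \<times> {0}) (unf_map fl)" "geq {0} (pi2_istar \<eta>') (pi2_istar \<eta>)"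
      using dir1[OF assms(1) Fh fl0 ck(2) ck(1) \<eta>'(1)] by blast
    then show "\<exists>h\<in>pi2_istar ` Lift (S \<times> {0}) (unf_map fl). geq {0} g h"
      using \<eta>'(2) by blast
  next
    fix h assume "h \<in> pi2_istar ` Lift (S \<times> {0}) (unf_map fl)"
    then obtain \<eta> where \<eta>: "\<eta> \<in> Lift (S \<times> {0}) (unf_map fl)" "h = pi2_istar \<eta>" by auto
    obtain \<eta>' where "\<eta>' \<in> Lift (S \<times> {0}) (aug_map fl (\<lambda>z. c * z ^ k))" "pi2_istar \<eta>' = pi2_istar \<eta>"
      using dir2[OF Fh ck(2) \<eta>(1), of c] by blast
    then show "\<exists>g\<in>pi2_istar ` Lift (S \<times> {0}) (aug_map fl \<phi>). geq {0} h g"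
      using \<eta>(2) ck(3) geq_refl by (metis image_eqI)
  qed
qed


end
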